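(* Consider the two-layer evolutionary process described in the context, with death-Birth updating in both layers, and let $\boldsymbol{\xi}=(\xi^{[1]},\xi^{[2]})$ be any initial state that is not one of the four states in which both layers are monomorphic. Let $\rho^{[2]}(\boldsymbol{\xi})$ be the probability that, starting from $\boldsymbol{\xi}$, layer 2 eventually consists only of mutants. Then, under weak selection, the mutant is favored, i.e. $\left.\frac{\mathrm{d}}{\mathrm{d}\delta}\rho^{[2]}(\boldsymbol{\xi})\right|_{\delta=0}>0$, if and only if $$-(r-1)\,\tilde\theta_2+c\,\tilde\phi_{2,0}+b\,(\tilde\phi_{0,1}-\tilde\phi_{2,1})>0 .$$
   Context: There are $N\ge 2$ individuals $1,\dots,N$. For each layer $L\in\{1,2\}$ there is a connected undirected weighted graph on $\{1,\dots,N\}$ with symmetric nonnegative weights $w^{[L]}_{ij}$; let $s^{[L]}_i=\sum_j w^{[L]}_{ij}>0$, $p^{[L]}_{ij}=w^{[L]}_{ij}/s^{[L]}_i$, $P^{[L]}=(p^{[L]}_{ij})$, and $\pi^{[L]}_i=s^{[L]}_i/\sum_k s^{[L]}_k$. A state is $(x^{[1]},x^{[2]})\in\{0,1\}^N\times\{0,1\}^N$; $x^{[1]}_i=1$ ($0$) means $i$ is a cooperator (defector) in layer 1, $x^{[2]}_i=1$ ($0$) means $i$ is a mutant (resident) in layer 2. The payoff of $i$ is $u_i=-c\,x^{[1]}_i+\sum_j b\,p^{[1]}_{ij}x^{[1]}_j+(r-1)x^{[2]}_i+1$, with $r\ge0$, and the fecundity is $F_i=1+\delta u_i$, $\delta\ge0$.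 In each time step, simultaneously and independently in each layer $L$: choose $i$ uniformly at random, choose $j$ with probability $w^{[L]}_{ij}F_j/\sum_k w^{[L]}_{ik}F_k$, and set $x^{[L]}_i\leftarrow x^{[L]}_j$. Let $\hat\xi^{[L]}=\sum_i\pi^{[L]}_i\xi^{[L]}_i$. Let $(\tilde\beta_{ij})$ be the unique solution of: $\tilde\beta_{ii}=N(\xi^{[2]}_i-\hat\xi^{[2]})+\sum_k p^{[2]}_{ik}\tilde\beta_{kk}$; for $i\neq j$, $\tilde\beta_{ij}=\tfrac N2(\xi^{[2]}_i\xi^{[2]}_j-\hat\xi^{[2]})+\tfrac12\sum_k p^{[2]}_{ik}\tilde\beta_{kj}+\tfrac12\sum_k p^{[2]}_{jk}\tilde\beta_{ik}$; and $\sum_i\pi^{[2]}_i\tilde\beta_{ii}=0$. Let $(\tilde\gamma_{ij})$ be the unique solution of: for all $i,j$, $\tilde\gamma_{ij}=\frac{N^2}{2N-1}(\xi^{[2]}_i\xi^{[1]}_j-\hat\xi^{[1]}\hat\xi^{[2]})+\frac{1}{2N-1}\sum_{k_1,k_2}p^{[2]}_{ik_1}p^{[1]}_{jk_2}\tilde\gamma_{k_1k_2}+\frac{N-1}{2N-1}\Big(\sum_k p^{[2]}_{ik}\tilde\gamma_{kj}+\sum_k p^{[1]}_{jk}\tilde\gamma_{ik}\Big)$, with $\sum_i\pi^{[2]}_i\tilde\gamma_{ii}=0$. Define $\tilde\theta_n=\sum_{i,j}\pi^{[2]}_i\big((P^{[2]})^n\big)_{ij}\tilde\beta_{ij}$ and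 $\tilde\phi_{n,m}=\sum_{i,j}\pi^{[2]}_i\big((P^{[2]})^n(P^{[1]})^m\big)_{ij}\tilde\gamma_{ij}$ (first $n$ random-walk steps in the constant-selection layer 2, then $m$ steps in the game layer 1). *)

theory Defs
  imports Complex_Main "HOL-Library.Cardinality"
begin

text \<open>Individuals are the elements of a finite type 'n, so N = CARD('n).
  States are pairs (x1, x2) of boolean vectors: True = cooperator (layer 1) / mutant (layer 2).\<close>

type_synonym 'n state = "('n \<Rightarrow> bool) \<times> ('n \<Rightarrow> bool)"

definition graph_ok :: "('n::finite \<Rightarrow> 'n \<Rightarrow> real) \<Rightarrow> bool" where
  "graph_ok w \<longleftrightarrow> (\<forall>i j. w i j = w j i) \<and> (\<forall>i j. 0 \<le> w i j)
     \<and> (\<forall>i j. (i, j) \<in> {(a, b). w a b > 0}\<^sup>*)"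

definition strength :: "('n::finite \<Rightarrow> 'n \<Rightarrow> real) \<Rightarrow> 'n \<Rightarrow> real" where
  "strength w i = (\<Sum>j\<in>UNIV. w i j)"

definition tprob :: "('n::finite \<Rightarrow> 'n \<Rightarrow> real) \<Rightarrow> 'n \<Rightarrow> 'n \<Rightarrow> real" where
  "tprob w i j = w i j / strength w i"

definition sdist :: "('n::finite \<Rightarrow> 'n \<Rightarrow> real) \<Rightarrow> 'n \<Rightarrow> real" where
  "sdist w i = strength w i / (\<Sum>k\<in>UNIV. strength w k)"

definition hat :: "('n::finite \<Rightarrow> 'n \<Rightarrow> real) \<Rightarrow> ('n \<Rightarrow> bool) \<Rightarrow> real" where
  "hat w x = (\<Sum>i\<in>UNIV. sdist w i * of_bool (x i))"

primrec mpow :: "('n::finite \<Rightarrow> 'n \<Rightarrow> real) \<Rightarrow> nat \<Rightarrow> 'n \<Rightarrow> 'n \<Rightarrow> real" where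
  "mpow P 0 i j = of_bool (i = j)"
| "mpow P (Suc n) i j = (\<Sum>k\<in>UNIV. P i k * mpow P n k j)"

definition payoff :: "real \<Rightarrow> real \<Rightarrow> real \<Rightarrow> ('n::finite \<Rightarrow> 'n \<Rightarrow> real) \<Rightarrow> 'n state \<Rightarrow> 'n \<Rightarrow> real" where
  "payoff b c r w1 s i = - c * of_bool (fst s i)
     + (\<Sum>j\<in>UNIV. b * tprob w1 i j * of_bool (fst s j))
     + (r - 1) * of_bool (snd s i) + 1"

definition fecundity :: "real \<Rightarrow> real \<Rightarrow> real \<Rightarrow> ('n::finite \<Rightarrow> 'n \<Rightarrow> real) \<Rightarrow> real \<Rightarrow> 'n state \<Rightarrow> 'n \<Rightarrow> real" where
  "fecundity b c r w1 \<delta> s i = 1 + \<delta> * payoff b c r w1 s i"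

text \<open>death-Birth update in one layer: probability that layer configuration x becomes y,
  given fecundities F: choose i uniformly, then j with prob. w i j F j / sum_k w i k F k,
  and set x_i := x_j.\<close>
definition layer_step :: "('n::finite \<Rightarrow> 'n \<Rightarrow> real) \<Rightarrow> ('n \<Rightarrow> real) \<Rightarrow> ('n \<Rightarrow> bool) \<Rightarrow> ('n \<Rightarrow> bool) \<Rightarrow> real" where
  "layer_step w F x y = (1 / real CARD('n)) *
     (\<Sum>i\<in>UNIV. \<Sum>j\<in>UNIV. if y = x(i := x j) then w i j * F j / (\<Sum>k\<in>UNIV. w i k * F k) else 0)"

text \<open>One-step transition kernel of the two-layer chain (layers update simultaneously and
  independently, both using fecundities of the current state).\<close>
definition trans :: "real \<Rightarrow> real \<Rightarrow> real \<Rightarrow> ('n::finite \<Rightarrow> 'n \<Rightarrow> real) \<Rightarrow> ('n \<Rightarrow> 'n \<Rightarrow> real) \<Rightarrow> real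
     \<Rightarrow> 'n state \<Rightarrow> 'n state \<Rightarrow> real" where
  "trans b c r w1 w2 \<delta> s s' =
     layer_step w1 (fecundity b c r w1 \<delta> s) (fst s) (fst s') *
     layer_step w2 (fecundity b c r w1 \<delta> s) (snd s) (snd s')"

primrec nstep :: "('s::finite \<Rightarrow> 's \<Rightarrow> real) \<Rightarrow> nat \<Rightarrow> 's \<Rightarrow> 's \<Rightarrow> real" where
  "nstep T 0 s s' = of_bool (s = s')"
| "nstep T (Suc n) s s' = (\<Sum>u\<in>UNIV. T s u * nstep T n u s')"

text \<open>Fixation probability of the mutant in layer 2: the probability of eventually reaching
  a state with layer 2 all mutants. Since that set is absorbing for layer 2, this is the
  limit of the probability of being in it at time t.\<close>
definition rho2 :: "real \<Rightarrow> real \<Rightarrow> real \<Rightarrow> ('n::finite \<Rightarrow> 'n \<Rightarrow> real) \<Rightarrow> ('n \<Rightarrow> 'n \<Rightarrow> real) \<Rightarrow> real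
     \<Rightarrow> 'n state \<Rightarrow> real" where
  "rho2 b c r w1 w2 \<delta> \<xi> =
     lim (\<lambda>t. \<Sum>s'\<in>{s'. \<forall>i. snd s' i}. nstep (trans b c r w1 w2 \<delta>) t \<xi> s')"

definition beta_sys :: "('n::finite \<Rightarrow> 'n \<Rightarrow> real) \<Rightarrow> ('n \<Rightarrow> bool) \<Rightarrow> ('n \<Rightarrow> 'n \<Rightarrow> real) \<Rightarrow> bool" where
  "beta_sys w2 x2 \<beta> \<longleftrightarrow>
     (\<forall>i. \<beta> i i = real CARD('n) * (of_bool (x2 i) - hat w2 x2)
                 + (\<Sum>k\<in>UNIV. tprob w2 i k * \<beta> k k))
   \<and> (\<forall>i j. i \<noteq> j \<longrightarrow> \<beta> i j = real CARD('n) / 2 * (of_bool (x2 i) * of_bool (x2 j) - hat w2 x2)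
                 + 1/2 * (\<Sum>k\<in>UNIV. tprob w2 i k * \<beta> k j)
                 + 1/2 * (\<Sum>k\<in>UNIV. tprob w2 j k * \<beta> i k))
   \<and> (\<Sum>i\<in>UNIV. sdist w2 i * \<beta> i i) = 0"

definition betaT :: "('n::finite \<Rightarrow> 'n \<Rightarrow> real) \<Rightarrow> ('n \<Rightarrow> bool) \<Rightarrow> 'n \<Rightarrow> 'n \<Rightarrow> real" where
  "betaT w2 x2 = (THE \<beta>. beta_sys w2 x2 \<beta>)"

definition gamma_sys :: "('n::finite \<Rightarrow> 'n \<Rightarrow> real) \<Rightarrow> ('n \<Rightarrow> 'n \<Rightarrow> real) \<Rightarrow> 'n state
     \<Rightarrow> ('n \<Rightarrow> 'n \<Rightarrow> real) \<Rightarrow> bool" where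
  "gamma_sys w1 w2 \<xi> \<gamma> \<longleftrightarrow>
     (\<forall>i j. \<gamma> i j =
        real CARD('n) ^ 2 / (2 * real CARD('n) - 1) *
          (of_bool (snd \<xi> i) * of_bool (fst \<xi> j) - hat w1 (fst \<xi>) * hat w2 (snd \<xi>))
      + 1 / (2 * real CARD('n) - 1) *
          (\<Sum>k1\<in>UNIV. \<Sum>k2\<in>UNIV. tprob w2 i k1 * tprob w1 j k2 * \<gamma> k1 k2)
      + (real CARD('n) - 1) / (2 * real CARD('n) - 1) *
          ((\<Sum>k\<in>UNIV. tprob w2 i k * \<gamma> k j) + (\<Sum>k\<in>UNIV. tprob w1 j k * \<gamma> i k)))
   \<and> (\<Sum>i\<in>UNIV. sdist w2 i * \<gamma> i i) = 0"

definition gammaT :: "('n::finite \<Rightarrow> 'n \<Rightarrow> real) \<Rightarrow> ('n \<Rightarrow> 'n \<Rightarrow> real) \<Rightarrow> 'n state \<Rightarrow> 'n \<Rightarrow> 'n \<Rightarrow> real" where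
  "gammaT w1 w2 \<xi> = (THE \<gamma>. gamma_sys w1 w2 \<xi> \<gamma>)"

definition thetaT :: "('n::finite \<Rightarrow> 'n \<Rightarrow> real) \<Rightarrow> ('n \<Rightarrow> bool) \<Rightarrow> nat \<Rightarrow> real" where
  "thetaT w2 x2 n = (\<Sum>i\<in>UNIV. \<Sum>j\<in>UNIV. sdist w2 i * mpow (tprob w2) n i j * betaT w2 x2 i j)"

definition phiT :: "('n::finite \<Rightarrow> 'n \<Rightarrow> real) \<Rightarrow> ('n \<Rightarrow> 'n \<Rightarrow> real) \<Rightarrow> 'n state \<Rightarrow> nat \<Rightarrow> nat \<Rightarrow> real" where
  "phiT w1 w2 \<xi> n m = (\<Sum>i\<in>UNIV. \<Sum>j\<in>UNIV. sdist w2 i *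
      (\<Sum>k\<in>UNIV. mpow (tprob w2) n i k * mpow (tprob w1) m k j) * gammaT w1 w2 \<xi> i j)"

definition monomorphic :: "('n \<Rightarrow> bool) \<Rightarrow> bool" where
  "monomorphic x \<longleftrightarrow> (\<forall>i. x i) \<or> (\<forall>i. \<not> x i)"

end

theory Submission
  imports Defs "HOL-Analysis.Analysis"
begin

lemma sum_ofb_r: "(\<Sum>k\<in>UNIV. (f::'a::finite\<Rightarrow>real) k * of_bool (k = j)) = f j"
proof -
  have "(\<Sum>k\<in>UNIV. f k * of_bool (k = j)) = (\<Sum>k\<in>UNIV. if k = j then f k else 0)" by (rule sum.cong) auto
  then show ?thesis by simp
qed

lemma sum_ofb_l: "(\<Sum>k\<in>UNIV. of_bool (j = k) * (f::'a::finite\<Rightarrow>real) k) = f j"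
proof -
  have "(\<Sum>k\<in>UNIV. of_bool (j = k) * f k) = (\<Sum>k\<in>UNIV. if j = k then f k else 0)" by (rule sum.cong) auto
  then show ?thesis by simp
qed

lemma avg_max:
  fixes p v :: "'a \<Rightarrow> real"
  assumes "finite A" "\<And>k. k \<in> A \<Longrightarrow> p k \<ge> 0" "(\<Sum>k\<in>A. p k) = 1"
    "\<And>k. k \<in> A \<Longrightarrow> v k \<le> M" "(\<Sum>k\<in>A. p k * v k) = M" "k \<in> A" "p k > 0"
  shows "v k = M"
proof -
  have "(\<Sum>k\<in>A. p k * (M - v k)) = (\<Sum>k\<in>A. p k * M - p k * v k)"
    by (rule sum.cong) (auto simp: right_diff_distrib)
  also have "\<dots> = (\<Sum>k\<in>A. p k * M) - (\<Sum>k\<in>A. p k * v k)"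
    by (rule sum_subtractf)
  also have "(\<Sum>k\<in>A. p k * M) = M" using assms(3) by (simp add: sum_distrib_right[symmetric])
  finally have z: "(\<Sum>k\<in>A. p k * (M - v k)) = 0" using assms(5) by simp
  have nn: "p k * (M - v k) \<ge> 0" if "k \<in> A" for k
    using assms(2)[OF that] assms(4)[OF that] by simp
  have "\<forall>k\<in>A. p k * (M - v k) = 0" using sum_nonneg_eq_0_iff[OF assms(1) nn] z by simp
  then have "p k * (M - v k) = 0" using assms(6) by blast
  then show ?thesis using assms(7) by simp
qed

lemma avg_le:
  fixes p v :: "'a \<Rightarrow> real"
  assumes "finite A" "\<And>k. k \<in> A \<Longrightarrow> p k \<ge> 0" "(\<Sum>k\<in>A. p k) = 1"
    "\<And>k. k \<in> A \<Longrightarrow> v k \<le> M"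
  shows "(\<Sum>k\<in>A. p k * v k) \<le> M"
proof -
  have "(\<Sum>k\<in>A. p k * v k) \<le> (\<Sum>k\<in>A. p k * M)"
    by (rule sum_mono) (use assms in \<open>auto intro: mult_left_mono\<close>)
  also have "\<dots> = M" using assms by (simp add: sum_distrib_right[symmetric])
  finally show ?thesis .
qed

locale gr =
  fixes w :: "'n::finite \<Rightarrow> 'n \<Rightarrow> real"
  assumes ok: "graph_ok w" and card2: "CARD('n) \<ge> 2"
begin

abbreviation "P \<equiv> tprob w"
abbreviation "\<pi> \<equiv> sdist w"

lemma sym: "w i j = w j i" and nonneg: "w i j \<ge> 0"
  and conn: "(i, j) \<in> {(a, b). w a b > 0}\<^sup>*"
  using ok unfolding graph_ok_def by auto

lemma exists_other: "\<exists>j::'n. j \<noteq> i"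
proof (rule ccontr)
  assume "\<not> ?thesis"
  then have "UNIV = {i}" by auto
  then have "CARD('n) = 1" by (metis card.empty card.insert empty_iff finite.intros(1) One_nat_def)
  with card2 show False by simp
qed

lemma exists_edge: "\<exists>k. w i k > 0"
proof -
  obtain j where "j \<noteq> i" using exists_other by blast
  from conn[of i j] this show ?thesis
    by (induction rule: converse_rtrancl_induct) auto
qed

lemma strength_pos: "strength w i > 0"
proof -
  obtain k where k: "w i k > 0" using exists_edge by blast
  have "w i k \<le> (\<Sum>j\<in>UNIV. w i j)"
    by (rule member_le_sum) (auto simp: nonneg)
  with k show ?thesis unfolding strength_def by simp
qed

lemma P_nonneg: "P i j \<ge> 0"
  unfolding tprob_def using strength_pos[of i] nonneg[of i j] by simp

lemma P_sum: "(\<Sum>j\<in>UNIV. P i j) = 1"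
  unfolding tprob_def using strength_pos[of i]
  by (simp add: sum_divide_distrib[symmetric] strength_def)

lemma P_pos_iff: "P i j > 0 \<longleftrightarrow> w i j > 0"
  unfolding tprob_def using strength_pos[of i] by (simp add: divide_pos_pos zero_less_divide_iff)

lemma total_pos: "(\<Sum>k\<in>UNIV. strength w k) > 0"
  using strength_pos by (simp add: sum_pos)

lemma pi_nonneg: "\<pi> i \<ge> 0"
  unfolding sdist_def using strength_pos[of i] total_pos by simp

lemma pi_pos: "\<pi> i > 0"
  unfolding sdist_def using strength_pos[of i] total_pos by simp

lemma pi_sum: "(\<Sum>i\<in>UNIV. \<pi> i) = 1"
  unfolding sdist_def using total_pos by (simp add: sum_divide_distrib[symmetric])

lemma rev: "\<pi> i * P i j = \<pi> j * P j i"
  unfolding sdist_def tprob_def using strength_pos[of i] strength_pos[of j] sym[of i j]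
  by simp

lemma stat: "(\<Sum>i\<in>UNIV. \<pi> i * P i j) = \<pi> j"
proof -
  have "(\<Sum>i\<in>UNIV. \<pi> i * P i j) = (\<Sum>i\<in>UNIV. \<pi> j * P j i)" by (simp add: rev)
  also have "\<dots> = \<pi> j" by (simp add: sum_distrib_left[symmetric] P_sum)
  finally show ?thesis .
qed

lemma connP: "(i, j) \<in> {(a, b). P a b > 0}\<^sup>*"
  using conn[of i j] by (simp add: P_pos_iff)

lemma harmonic_const:
  assumes h: "\<And>i. v i = (\<Sum>j\<in>UNIV. P i j * v j)"
  shows "v i = v j"
proof -
  define M where "M = Max (range v)"
  have le: "v k \<le> M" for k unfolding M_def by simp
  have "M \<in> range v" unfolding M_def by (rule Max_in) auto
  then obtain a where a: "v a = M" by auto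
  have all: "v k = M" for k
  proof -
    have "(a, k) \<in> {(a, b). P a b > 0}\<^sup>*" by (rule connP)
    then show ?thesis
    proof (induction rule: rtrancl_induct)
      case base then show ?case by (rule a)
    next
      case (step y z)
      have "v z = M"
        by (rule avg_max[of UNIV "P y" v M]) (use step h[of y] le in \<open>auto simp: P_nonneg P_sum\<close>)
      then show ?case .
    qed
  qed
  show ?thesis using all[of i] all[of j] by simp
qed

lemma mpow_nonneg: "mpow P n i j \<ge> 0"
  by (induction n arbitrary: i j) (auto intro!: sum_nonneg simp: P_nonneg)

lemma mpow_sum: "(\<Sum>j\<in>UNIV. mpow P n i j) = 1"
proof (induction n arbitrary: i)
  case 0 then show ?case by simp
next
  case (Suc n)
  have "(\<Sum>j\<in>UNIV. mpow P (Suc n) i j) = (\<Sum>k\<in>UNIV. P i k * (\<Sum>j\<in>UNIV. mpow P n k j))"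
    by (simp add: sum_distrib_left) (rule sum.swap)
  also have "\<dots> = 1" using Suc by (simp add: P_sum)
  finally show ?case .
qed

lemma mpow_stat: "(\<Sum>i\<in>UNIV. \<pi> i * mpow P n i j) = \<pi> j"
proof (induction n arbitrary: j)
  case 0 then show ?case by (simp add: sum_ofb_r)
next
  case (Suc n)
  have "(\<Sum>i\<in>UNIV. \<pi> i * mpow P (Suc n) i j) = (\<Sum>k\<in>UNIV. (\<Sum>i\<in>UNIV. \<pi> i * P i k) * mpow P n k j)"
    by (simp add: sum_distrib_left sum_distrib_right mult.assoc) (rule sum.swap)
  also have "\<dots> = \<pi> j" using Suc by (simp add: stat)
  finally show ?case .
qed

lemma mpow1: "mpow P 1 i j = P i j"
  by (simp add: sum_ofb_r)

lemma mpow2: "mpow P 2 i j = (\<Sum>k\<in>UNIV. P i k * P k j)"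
  by (simp add: numeral_2_eq_2 mpow1[simplified])

end

definition vL :: "(('a::finite \<Rightarrow> real) \<Rightarrow> ('a \<Rightarrow> real)) \<Rightarrow> real^'a \<Rightarrow> real^'a" where
  "vL L y = (\<chi> a. L (vec_nth y) a)"

lemma fin_lin_vec:
  fixes L :: "('a::finite \<Rightarrow> real) \<Rightarrow> ('a \<Rightarrow> real)"
  assumes add: "\<And>u v. L (\<lambda>x. u x + v x) = (\<lambda>x. L u x + L v x)"
    and sc: "\<And>c u. L (\<lambda>x. c * u x) = (\<lambda>x. c * L u x)"
    and inj0: "\<And>u. L u = (\<lambda>_. 0) \<Longrightarrow> u = (\<lambda>_. 0)"
  shows "linear (vL L)" "inj (vL L)"
proof -
  show lin: "linear (vL L)"
  proof (rule linearI)
    fix y z :: "real^'a"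
    have e: "vec_nth (y + z) = (\<lambda>b. vec_nth y b + vec_nth z b)" by (rule ext) simp
    show "vL L (y + z) = vL L y + vL L z" unfolding vL_def by (simp only: e add) (simp add: vec_eq_iff)
  next
    fix c and y :: "real^'a"
    have e: "vec_nth (c *\<^sub>R y) = (\<lambda>b. c * vec_nth y b)" by (rule ext) simp
    show "vL L (c *\<^sub>R y) = c *\<^sub>R vL L y" unfolding vL_def by (simp only: e sc) (simp add: vec_eq_iff)
  qed
  show "inj (vL L)"
    unfolding linear_injective_0[OF lin]
  proof (intro allI impI)
    fix y :: "real^'a" assume "vL L y = 0"
    then have "L (vec_nth y) = (\<lambda>_. 0)" unfolding vL_def by (simp add: vec_eq_iff fun_eq_iff)
    then have "vec_nth y = (\<lambda>_. 0)" by (rule inj0)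
    then show "y = 0" by (simp add: vec_eq_iff fun_eq_iff)
  qed
qed

lemma fin_lin_surj:
  fixes L :: "('a::finite \<Rightarrow> real) \<Rightarrow> ('a \<Rightarrow> real)"
  assumes add: "\<And>u v. L (\<lambda>x. u x + v x) = (\<lambda>x. L u x + L v x)"
    and sc: "\<And>c u. L (\<lambda>x. c * u x) = (\<lambda>x. c * L u x)"
    and inj0: "\<And>u. L u = (\<lambda>_. 0) \<Longrightarrow> u = (\<lambda>_. 0)"
  shows "\<exists>u. L u = f"
proof -
  have lin: "linear (vL L)" by (rule fin_lin_vec(1)[OF add sc inj0])
  have inj: "inj (vL L)" by (rule fin_lin_vec(2)[OF add sc inj0])
  have "surj (vL L)" by (rule linear_injective_imp_surjective[OF lin inj]) simp
  then obtain y where "vL L y = (\<chi> a. f a)" by (metis surjD)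
  then have "L (vec_nth y) = f" unfolding vL_def by (simp add: vec_eq_iff fun_eq_iff)
  then show ?thesis by blast
qed

lemma fin_lin_bound:
  fixes L :: "('a::finite \<Rightarrow> real) \<Rightarrow> ('a \<Rightarrow> real)"
  assumes add: "\<And>u v. L (\<lambda>x. u x + v x) = (\<lambda>x. L u x + L v x)"
    and sc: "\<And>c u. L (\<lambda>x. c * u x) = (\<lambda>x. c * L u x)"
    and inj0: "\<And>u. L u = (\<lambda>_. 0) \<Longrightarrow> u = (\<lambda>_. 0)"
  shows "\<exists>C>0. \<forall>u a. \<bar>u a\<bar> \<le> C * (\<Sum>b\<in>UNIV. \<bar>L u b\<bar>)"
proof -
  have lin: "linear (vL L)" by (rule fin_lin_vec(1)[OF add sc inj0])
  have inj: "inj (vL L)" by (rule fin_lin_vec(2)[OF add sc inj0])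
  obtain B where B: "B > 0" "\<And>x. B * norm x \<le> norm (vL L x)"
    using linear_inj_bounded_below_pos[OF lin inj] by blast
  have "\<bar>u a\<bar> \<le> (1/B) * (\<Sum>b\<in>UNIV. \<bar>L u b\<bar>)" for u a
  proof -
    define y where "y = (\<chi> a. u a)"
    have uy: "vec_nth y = u" unfolding y_def by (rule ext) simp
    have "\<bar>u a\<bar> = \<bar>y $ a\<bar>" unfolding y_def by simp
    also have "\<dots> \<le> norm y" by (rule component_le_norm_cart)
    also have "\<dots> \<le> (1/B) * norm (vL L y)" using B(2)[of y] B(1) by (simp add: field_simps)
    also have "norm (vL L y) \<le> (\<Sum>b\<in>UNIV. \<bar>vL L y $ b\<bar>)" by (rule norm_le_l1_cart)
    also have "(\<Sum>b\<in>UNIV. \<bar>vL L y $ b\<bar>) = (\<Sum>b\<in>UNIV. \<bar>L u b\<bar>)" unfolding vL_def uy by simp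
    finally show ?thesis using B(1) by (simp add: divide_right_mono)
  qed
  then show ?thesis using B(1) by (intro exI[of _ "1/B"]) auto
qed

context gr begin

lemma coal_le:
  assumes d: "\<And>i. v i i = 0"
    and h: "\<And>i j. i \<noteq> j \<Longrightarrow> v i j = 1/2 * (\<Sum>k\<in>UNIV. P i k * v k j) + 1/2 * (\<Sum>k\<in>UNIV. P j k * v i k)"
  shows "v i j \<le> 0"
proof (rule ccontr)
  assume "\<not> v i j \<le> 0"
  define M where "M = Max (range (case_prod v))"
  have le: "v x y \<le> M" for x y unfolding M_def by (rule Max_ge) auto
  have "M \<in> range (case_prod v)" unfolding M_def by (rule Max_in) auto
  then obtain a b where ab: "v a b = M" by auto
  have Mpos: "M > 0" using le[of i j] \<open>\<not> v i j \<le> 0\<close> by simp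
  have "(a, x) \<in> {(a, b). P a b > 0}\<^sup>* \<Longrightarrow> v x b = M" for x
  proof (induction rule: rtrancl_induct)
    case base then show ?case by (rule ab)
  next
    case (step y z)
    have yb: "y \<noteq> b" using step(3) d[of b] Mpos by auto
    define A where "A = (\<Sum>k\<in>UNIV. P y k * v k b)"
    define B where "B = (\<Sum>k\<in>UNIV. P b k * v y k)"
    have "A \<le> M" unfolding A_def by (rule avg_le) (auto simp: P_nonneg P_sum le)
    moreover have "B \<le> M" unfolding B_def by (rule avg_le) (auto simp: P_nonneg P_sum le)
    moreover have "M = 1/2 * A + 1/2 * B" using h[OF yb] step(3) unfolding A_def B_def by simp
    ultimately have "A = M" by linarith
    then show ?case
      by (intro avg_max[of UNIV "P y" "\<lambda>k. v k b" M]) (use step(2) in \<open>auto simp: P_nonneg P_sum le A_def\<close>)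
  qed
  from this[OF connP[of a b]] have "v b b = M" .
  with d[of b] Mpos show False by simp
qed

lemma coal_zero:
  assumes d: "\<And>i. v i i = 0"
    and h: "\<And>i j. i \<noteq> j \<Longrightarrow> v i j = 1/2 * (\<Sum>k\<in>UNIV. P i k * v k j) + 1/2 * (\<Sum>k\<in>UNIV. P j k * v i k)"
  shows "v i j = 0"
proof -
  have "v i j \<le> 0" by (rule coal_le[OF d h]) auto
  moreover have "- v i j \<le> 0"
  proof (rule coal_le[of "\<lambda>i j. - v i j"])
    show "- v i i = 0" for i using d by simp
    fix i j :: 'n assume "i \<noteq> j"
    then show "- v i j = 1/2 * (\<Sum>k\<in>UNIV. P i k * - v k j) + 1/2 * (\<Sum>k\<in>UNIV. P j k * - v i k)"
      using h[of i j] by (simp add: sum_negf)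
  qed
  ultimately show ?thesis by simp
qed

end

locale gr2 = g1: gr w1 + g2: gr w2 for w1 w2 :: "'n::finite \<Rightarrow> 'n \<Rightarrow> real"
begin

lemma N2: "real CARD('n) \<ge> 2" using g1.card2 by simp

definition Qop :: "('n \<Rightarrow> 'n \<Rightarrow> real) \<Rightarrow> 'n \<Rightarrow> 'n \<Rightarrow> real" where
  "Qop v i j = 1 / (2 * real CARD('n) - 1) * (\<Sum>k1\<in>UNIV. \<Sum>k2\<in>UNIV. g2.P i k1 * g1.P j k2 * v k1 k2)
      + (real CARD('n) - 1) / (2 * real CARD('n) - 1) * ((\<Sum>k\<in>UNIV. g2.P i k * v k j) + (\<Sum>k\<in>UNIV. g1.P j k * v i k))"

lemma Q_max:
  assumes h: "\<And>i j. v i j = Qop v i j" and le: "\<And>x y. v x y \<le> M" and vij: "v i j = M"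
  shows "g2.P i k > 0 \<Longrightarrow> v k j = M" and "g1.P j k > 0 \<Longrightarrow> v i k = M"
proof -
  define A1 where "A1 = (\<Sum>k1\<in>UNIV. \<Sum>k2\<in>UNIV. g2.P i k1 * g1.P j k2 * v k1 k2)"
  define A2 where "A2 = (\<Sum>k\<in>UNIV. g2.P i k * v k j)"
  define A3 where "A3 = (\<Sum>k\<in>UNIV. g1.P j k * v i k)"
  define c1 where "c1 = 1 / (2 * real CARD('n) - 1)"
  define c2 where "c2 = (real CARD('n) - 1) / (2 * real CARD('n) - 1)"
  have c1: "c1 > 0" and c2: "c2 > 0" unfolding c1_def c2_def using N2 by auto
  have c12: "c1 + 2 * c2 = 1" unfolding c1_def c2_def using N2 by (simp add: field_simps)
  have A1': "A1 = (\<Sum>k1\<in>UNIV. g2.P i k1 * (\<Sum>k2\<in>UNIV. g1.P j k2 * v k1 k2))"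
    unfolding A1_def by (simp add: sum_distrib_left mult.assoc)
  have inner: "(\<Sum>k2\<in>UNIV. g1.P j k2 * v k1 k2) \<le> M" for k1
    by (rule avg_le) (auto simp: g1.P_nonneg g1.P_sum le)
  have "A1 \<le> M" unfolding A1' by (rule avg_le) (auto simp: g2.P_nonneg g2.P_sum inner)
  moreover have "A2 \<le> M" unfolding A2_def by (rule avg_le) (auto simp: g2.P_nonneg g2.P_sum le)
  moreover have "A3 \<le> M" unfolding A3_def by (rule avg_le) (auto simp: g1.P_nonneg g1.P_sum le)
  ultimately have a1: "c1 * A1 \<le> c1 * M" and a2: "c2 * A2 \<le> c2 * M" and a3: "c2 * A3 \<le> c2 * M"
    using c1 c2 by (simp_all add: mult_left_mono)
  have e: "M = c1 * A1 + c2 * A2 + c2 * A3"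
    using h[of i j] vij unfolding Qop_def A1_def A2_def A3_def c1_def c2_def by (simp add: distrib_left)
  have cm: "c1 * M + c2 * M + c2 * M = M" using c12 by (metis distrib_right mult_2 mult_1 add.assoc)
  have "c2 * A2 \<ge> c2 * M" and "c2 * A3 \<ge> c2 * M" using a1 a2 a3 e cm by linarith+
  then have "A2 \<ge> M" "A3 \<ge> M" using c2 by simp_all
  then have eq2: "A2 = M" and eq3: "A3 = M" using \<open>A2 \<le> M\<close> \<open>A3 \<le> M\<close> by auto
  show "g2.P i k > 0 \<Longrightarrow> v k j = M"
    by (rule avg_max[of UNIV "g2.P i" "\<lambda>k. v k j" M]) (use eq2 in \<open>auto simp: g2.P_nonneg g2.P_sum le A2_def\<close>)
  show "g1.P j k > 0 \<Longrightarrow> v i k = M"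
    by (rule avg_max[of UNIV "g1.P j" "\<lambda>k. v i k" M]) (use eq3 in \<open>auto simp: g1.P_nonneg g1.P_sum le A3_def\<close>)
qed

lemma Q_harm_const:
  assumes h: "\<And>i j. v i j = Qop v i j"
  shows "v i j = v i' j'"
proof -
  define M where "M = Max (range (case_prod v))"
  have le: "v x y \<le> M" for x y unfolding M_def by (rule Max_ge) auto
  have "M \<in> range (case_prod v)" unfolding M_def by (rule Max_in) auto
  then obtain a b where ab: "v a b = M" by auto
  have col: "v x b = M" for x
  proof -
    have "(a, x) \<in> {(a, b). g2.P a b > 0}\<^sup>*" by (rule g2.connP)
    then show ?thesis
    proof (induction rule: rtrancl_induct)
      case base then show ?case by (rule ab)
    next
      case (step y z) then show ?case using Q_max(1)[OF h le, of y b z] by simp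
    qed
  qed
  have all: "v x y = M" for x y
  proof -
    have "(b, y) \<in> {(a, b). g1.P a b > 0}\<^sup>*" by (rule g1.connP)
    then show ?thesis
    proof (induction rule: rtrancl_induct)
      case base then show ?case by (rule col)
    next
      case (step y z) then show ?case using Q_max(2)[OF h le, of x y z] by simp
    qed
  qed
  show ?thesis using all by simp
qed

end

lemma L_zero:
  fixes L :: "('a \<Rightarrow> real) \<Rightarrow> ('b \<Rightarrow> real)"
  assumes sc: "\<And>c u. L (\<lambda>x. c * u x) = (\<lambda>x. c * L u x)"
  shows "L (\<lambda>_. 0) = (\<lambda>_. 0)"
proof -
  have "L (\<lambda>x. 0 * f x) = (\<lambda>x. 0 * L f x)" for f by (rule sc)
  from this[of "\<lambda>_. 0"] show ?thesis by simp
qed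

lemma L_sum:
  fixes L :: "('a \<Rightarrow> real) \<Rightarrow> ('b \<Rightarrow> real)"
  assumes add: "\<And>u v. L (\<lambda>x. u x + v x) = (\<lambda>x. L u x + L v x)"
    and sc: "\<And>c u. L (\<lambda>x. c * u x) = (\<lambda>x. c * L u x)"
    and fin: "finite A"
  shows "L (\<lambda>p. \<Sum>q\<in>A. c q * f q p) = (\<lambda>p. \<Sum>q\<in>A. c q * L (f q) p)"
  using fin
proof (induction A rule: finite_induct)
  case empty
  have "L (\<lambda>x. 0 * f x) = (\<lambda>x. 0 * L f x)" for f by (rule sc)
  from this[of "\<lambda>_. 0"] show ?case by simp
next
  case (insert a F)
  have "L (\<lambda>p. \<Sum>q\<in>insert a F. c q * f q p) = L (\<lambda>p. c a * f a p + (\<Sum>q\<in>F. c q * f q p))"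
    using insert by simp
  also have "\<dots> = (\<lambda>p. c a * L (f a) p + L (\<lambda>p. \<Sum>q\<in>F. c q * f q p) p)"
    by (simp only: add sc)
  also have "\<dots> = (\<lambda>p. \<Sum>q\<in>insert a F. c q * L (f q) p)"
    using insert by simp
  finally show ?case .
qed

lemma sum_upd:
  fixes f :: "'a::finite \<Rightarrow> real"
  shows "(\<Sum>i\<in>UNIV. f i * g ((h(k := v)) i)) = (\<Sum>i\<in>UNIV. f i * g (h i)) + f k * (g v - g (h k))"
proof -
  have "(\<Sum>i\<in>UNIV. f i * g ((h(k := v)) i)) = f k * g v + (\<Sum>i\<in>UNIV - {k}. f i * g (h i))"
    by (simp add: sum.remove[of UNIV k])
  moreover have "(\<Sum>i\<in>UNIV. f i * g (h i)) = f k * g (h k) + (\<Sum>i\<in>UNIV - {k}. f i * g (h i))"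
    by (simp add: sum.remove[of UNIV k])
  ultimately show ?thesis by (simp add: algebra_simps)
qed

lemma sum_if1:
  "(\<Sum>k\<in>(UNIV::'a::finite set). if k = i then a else b) = a + (real CARD('a) - 1) * (b::real)"
proof -
  have "(\<Sum>k\<in>(UNIV::'a set). if k = i then a else b) = a + (\<Sum>k\<in>UNIV - {i}. b)"
    by (simp add: sum.remove[of UNIV i])
  also have "(\<Sum>k\<in>(UNIV::'a set) - {i}. b) = (real CARD('a) - 1) * b"
    by (simp add: card_Diff_singleton of_nat_diff)
  finally show ?thesis .
qed

lemma sum_if2:
  assumes "i \<noteq> j"
  shows "(\<Sum>k\<in>(UNIV::'a::finite set). if k = i then a else if k = j then b else c) = a + b + (real CARD('a) - 2) * (c::real)"
proof -
  have "(\<Sum>k\<in>(UNIV::'a set). if k = i then a else if k = j then b else c)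
      = a + (\<Sum>k\<in>UNIV - {i}. if k = j then b else c)"
    by (simp add: sum.remove[of UNIV i])
  also have "(\<Sum>k\<in>UNIV - {i}. if k = j then b else c) = b + (\<Sum>k\<in>UNIV - {i} - {j}. c)"
    using assms by (subst sum.remove[of _ j]) auto
  also have "(\<Sum>k\<in>(UNIV::'a set) - {i} - {j}. c) = (real CARD('a) - 2) * c"
  proof -
    have "card ((UNIV::'a set) - {i} - {j}) = CARD('a) - 2"
      using assms by (simp add: card_Diff_singleton)
    moreover have "CARD('a) \<ge> 2"
    proof -
      have "{i, j} \<subseteq> (UNIV::'a set)" by simp
      then have "card {i, j} \<le> CARD('a)" by (intro card_mono) auto
      then show ?thesis using assms by simp
    qed
    ultimately show ?thesis by (simp add: of_nat_diff)
  qed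
  finally show ?thesis by simp
qed

context gr begin

definition E2 :: "(('n \<Rightarrow> bool) \<Rightarrow> real) \<Rightarrow> ('n \<Rightarrow> bool) \<Rightarrow> real" where
  "E2 G x = 1 / real CARD('n) * (\<Sum>k\<in>UNIV. \<Sum>l\<in>UNIV. P k l * G (x(k := x l)))"

lemma Npos: "real CARD('n) > 0" by simp

lemma E2_const: "E2 (\<lambda>_. c) x = c"
proof -
  have "(\<Sum>k\<in>UNIV. \<Sum>l\<in>UNIV. P k l * c) = (\<Sum>k\<in>(UNIV::'n set). c)"
    by (simp add: sum_distrib_right[symmetric] P_sum)
  then show ?thesis unfolding E2_def by simp
qed

lemma E2_add: "E2 (\<lambda>y. G y + H y) x = E2 G x + E2 H x"
  unfolding E2_def by (simp add: distrib_left sum.distrib)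

lemma E2_scale: "E2 (\<lambda>y. c * G y) x = c * E2 G x"
  unfolding E2_def by (simp add: sum_distrib_left algebra_simps)

lemma E2_diff: "E2 (\<lambda>y. G y - H y) x = E2 G x - E2 H x"
  unfolding E2_def by (simp add: right_diff_distrib sum_subtractf)

lemma E2_xi: "E2 (\<lambda>y. of_bool (y i)) x
   = of_bool (x i) + 1 / real CARD('n) * ((\<Sum>l\<in>UNIV. P i l * of_bool (x l)) - of_bool (x i))"
proof -
  have "(\<Sum>k\<in>UNIV. \<Sum>l\<in>UNIV. P k l * of_bool ((x(k := x l)) i))
      = (\<Sum>k\<in>UNIV. if k = i then (\<Sum>l\<in>UNIV. P i l * of_bool (x l)) else of_bool (x i))"
    by (rule sum.cong) (auto simp: sum_distrib_right[symmetric] P_sum)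
  also have "\<dots> = (\<Sum>l\<in>UNIV. P i l * of_bool (x l)) + (real CARD('n) - 1) * of_bool (x i)"
    by (rule sum_if1)
  finally show ?thesis unfolding E2_def by (simp add: field_simps)
qed

lemma E2_xixj:
  assumes "i \<noteq> j"
  shows "E2 (\<lambda>y. of_bool (y i) * of_bool (y j)) x
   = of_bool (x i) * of_bool (x j) + 1 / real CARD('n) *
      (((\<Sum>l\<in>UNIV. P i l * of_bool (x l)) - of_bool (x i)) * of_bool (x j)
       + of_bool (x i) * ((\<Sum>l\<in>UNIV. P j l * of_bool (x l)) - of_bool (x j)))"
proof -
  have "(\<Sum>k\<in>UNIV. \<Sum>l\<in>UNIV. P k l * (of_bool ((x(k := x l)) i) * of_bool ((x(k := x l)) j)))
      = (\<Sum>k\<in>UNIV. if k = i then (\<Sum>l\<in>UNIV. P i l * of_bool (x l)) * of_bool (x j)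
                   else if k = j then of_bool (x i) * (\<Sum>l\<in>UNIV. P j l * of_bool (x l))
                   else of_bool (x i) * of_bool (x j))"
    using assms
    by (intro sum.cong) (auto simp: sum_distrib_right[symmetric] sum_distrib_left[symmetric] P_sum mult.assoc mult.left_commute)
  also have "\<dots> = (\<Sum>l\<in>UNIV. P i l * of_bool (x l)) * of_bool (x j) + of_bool (x i) * (\<Sum>l\<in>UNIV. P j l * of_bool (x l))
       + (real CARD('n) - 2) * (of_bool (x i) * of_bool (x j))"
    by (rule sum_if2[OF assms])
  finally show ?thesis unfolding E2_def by (simp add: field_simps)
qed

lemma hat_upd: "hat w (x(k := v)) = hat w x + \<pi> k * (of_bool v - of_bool (x k))"
  unfolding hat_def by (rule sum_upd)

lemma E2_hat: "E2 (hat w) x = hat w x"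
proof -
  have "(\<Sum>k\<in>UNIV. \<Sum>l\<in>UNIV. P k l * hat w (x(k := x l)))
      = (\<Sum>k\<in>UNIV. hat w x + \<pi> k * ((\<Sum>l\<in>UNIV. P k l * of_bool (x l)) - of_bool (x k)))"
    by (rule sum.cong) (auto simp: hat_upd algebra_simps sum.distrib sum_distrib_left[symmetric] sum_distrib_right[symmetric] P_sum sum_subtractf)
  also have "\<dots> = (\<Sum>k\<in>(UNIV::'n set). hat w x) + ((\<Sum>k\<in>UNIV. \<pi> k * (\<Sum>l\<in>UNIV. P k l * of_bool (x l))) - (\<Sum>k\<in>UNIV. \<pi> k * of_bool (x k)))"
    by (simp only: sum.distrib right_diff_distrib sum_subtractf)
  also have "(\<Sum>k\<in>UNIV. \<pi> k * (\<Sum>l\<in>UNIV. P k l * of_bool (x l))) = (\<Sum>k\<in>UNIV. \<Sum>l\<in>UNIV. \<pi> k * P k l * of_bool (x l))"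
    by (simp only: sum_distrib_left mult.assoc)
  also have "\<dots> = (\<Sum>l\<in>UNIV. \<Sum>k\<in>UNIV. \<pi> k * P k l * of_bool (x l))"
    by (rule sum.swap)
  also have "\<dots> = (\<Sum>l\<in>UNIV. \<pi> l * of_bool (x l))"
    by (simp only: sum_distrib_right[symmetric] stat)
  also have "(\<Sum>k\<in>UNIV. \<pi> k * of_bool (x k)) = hat w x" unfolding hat_def ..
  finally have eq: "(\<Sum>k\<in>UNIV. \<Sum>l\<in>UNIV. P k l * hat w (x(k := x l))) = (\<Sum>k\<in>(UNIV::'n set). hat w x) + (hat w x - hat w x)" .
  show ?thesis unfolding E2_def eq by simp
qed

end

declare sum_mult_of_bool_eq[simp del] sum_of_bool_mult_eq[simp del] sum_of_bool_eq[simp del]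

lemma ofb_sq: "of_bool b * of_bool b = (of_bool b :: real)" by simp

context gr begin

lemma piP: "(\<Sum>i\<in>UNIV. \<pi> i * (\<Sum>k\<in>UNIV. P i k * f k)) = (\<Sum>k\<in>UNIV. \<pi> k * f k)"
proof -
  have "(\<Sum>i\<in>UNIV. \<pi> i * (\<Sum>k\<in>UNIV. P i k * f k)) = (\<Sum>i\<in>UNIV. \<Sum>k\<in>UNIV. \<pi> i * P i k * f k)"
    by (simp only: sum_distrib_left mult.assoc)
  also have "\<dots> = (\<Sum>k\<in>UNIV. \<Sum>i\<in>UNIV. \<pi> i * P i k * f k)" by (rule sum.swap)
  also have "\<dots> = (\<Sum>k\<in>UNIV. \<pi> k * f k)" by (simp only: sum_distrib_right[symmetric] stat)
  finally show ?thesis .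
qed

lemma E2_as_sum: "E2 G x = (\<Sum>q\<in>UNIV. (1 / real CARD('n) * P (fst q) (snd q)) * G (x(fst q := x (snd q))))"
proof -
  have "(\<Sum>k\<in>UNIV. \<Sum>l\<in>UNIV. P k l * G (x(k := x l))) = (\<Sum>q\<in>UNIV \<times> UNIV. P (fst q) (snd q) * G (x(fst q := x (snd q))))"
    by (simp add: sum.cartesian_product split_beta)
  then show ?thesis unfolding E2_def by (simp add: sum_distrib_left mult.assoc UNIV_Times_UNIV)
qed

definition Lbeta :: "('n \<times> 'n \<Rightarrow> real) \<Rightarrow> ('n \<times> 'n \<Rightarrow> real)" where
  "Lbeta v = (\<lambda>(i, j). if i = j then v (i, i) - (\<Sum>k\<in>UNIV. P i k * v (k, k)) + (\<Sum>k\<in>UNIV. \<pi> k * v (k, k))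
     else v (i, j) - 1/2 * (\<Sum>k\<in>UNIV. P i k * v (k, j)) - 1/2 * (\<Sum>k\<in>UNIV. P j k * v (i, k)))"

definition Fbeta :: "('n \<Rightarrow> bool) \<Rightarrow> ('n \<times> 'n \<Rightarrow> real)" where
  "Fbeta x = (\<lambda>(i, j). if i = j then real CARD('n) * (of_bool (x i) - hat w x)
     else real CARD('n) / 2 * (of_bool (x i) * of_bool (x j) - hat w x))"

lemma Lbeta_add: "Lbeta (\<lambda>p. u p + v p) = (\<lambda>p. Lbeta u p + Lbeta v p)"
  unfolding Lbeta_def by (rule ext) (auto simp: sum.distrib distrib_left)

lemma Lbeta_sc: "Lbeta (\<lambda>p. c * u p) = (\<lambda>p. c * Lbeta u p)"
  unfolding Lbeta_def by (rule ext) (auto simp: sum_distrib_left right_diff_distrib distrib_left mult.left_commute)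

lemma Lbeta_diff: "Lbeta (\<lambda>p. u p - v p) = (\<lambda>p. Lbeta u p - Lbeta v p)"
proof -
  have "Lbeta (\<lambda>p. u p - v p) = Lbeta (\<lambda>p. u p + (-1) * v p)" by simp
  also have "\<dots> = (\<lambda>p. Lbeta u p + (-1) * Lbeta v p)" by (simp only: Lbeta_add Lbeta_sc)
  finally show ?thesis by simp
qed

lemma sum_pi_Lbeta: "(\<Sum>i\<in>UNIV. \<pi> i * Lbeta v (i, i)) = (\<Sum>k\<in>UNIV. \<pi> k * v (k, k))"
proof -
  have "(\<Sum>i\<in>UNIV. \<pi> i * Lbeta v (i, i)) = (\<Sum>i\<in>UNIV. \<pi> i * v (i, i)) - (\<Sum>i\<in>UNIV. \<pi> i * (\<Sum>k\<in>UNIV. P i k * v (k, k)))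
       + (\<Sum>i\<in>UNIV. \<pi> i) * (\<Sum>k\<in>UNIV. \<pi> k * v (k, k))"
    unfolding Lbeta_def by (simp add: right_diff_distrib distrib_left sum.distrib sum_subtractf sum_distrib_right)
  also have "\<dots> = (\<Sum>k\<in>UNIV. \<pi> k * v (k, k))" by (simp only: piP pi_sum)
  finally show ?thesis .
qed

lemma Lbeta_inj0:
  assumes "Lbeta v = (\<lambda>_. 0)"
  shows "v = (\<lambda>_. 0)"
proof -
  have L0: "Lbeta v p = 0" for p using assms by simp
  define S where "S = (\<Sum>k\<in>UNIV. \<pi> k * v (k, k))"
  have "S = 0" using sum_pi_Lbeta[of v] L0 unfolding S_def by simp
  then have hd: "v (i, i) = (\<Sum>k\<in>UNIV. P i k * v (k, k))" for i
    using L0[of "(i, i)"] unfolding Lbeta_def S_def by simp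
  have dc: "v (i, i) = v (j, j)" for i j
    using harmonic_const[of "\<lambda>i. v (i, i)"] hd by blast
  have "S = v (i, i)" for i
  proof -
    have "S = (\<Sum>k\<in>UNIV. \<pi> k * v (i, i))" unfolding S_def using dc by (metis)
    also have "\<dots> = v (i, i)" by (simp add: sum_distrib_right[symmetric] pi_sum)
    finally show ?thesis .
  qed
  then have d0: "v (i, i) = 0" for i using \<open>S = 0\<close> by simp
  have "(\<lambda>i j. v (i, j)) i j = 0" for i j
  proof (rule coal_zero)
    show "v (i, i) = 0" for i by (rule d0)
    fix i j :: 'n assume "i \<noteq> j"
    then show "v (i, j) = 1/2 * (\<Sum>k\<in>UNIV. P i k * v (k, j)) + 1/2 * (\<Sum>k\<in>UNIV. P j k * v (i, k))"
      using L0[of "(i, j)"] unfolding Lbeta_def by simp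
  qed
  then show ?thesis by (auto simp: fun_eq_iff)
qed

lemma sum_pi_Fbeta: "(\<Sum>i\<in>UNIV. \<pi> i * Fbeta x (i, i)) = 0"
proof -
  have "(\<Sum>i\<in>UNIV. \<pi> i * Fbeta x (i, i)) = real CARD('n) * ((\<Sum>i\<in>UNIV. \<pi> i * of_bool (x i)) - (\<Sum>i\<in>UNIV. \<pi> i) * hat w x)"
    unfolding Fbeta_def by (simp add: sum_distrib_left sum_distrib_right right_diff_distrib sum_subtractf algebra_simps)
  then show ?thesis by (simp add: pi_sum hat_def)
qed

lemma beta_sys_imp:
  assumes s: "beta_sys w x \<beta>"
  shows "Lbeta (\<lambda>p. \<beta> (fst p) (snd p)) = Fbeta x"
proof (rule ext)
  fix p :: "'n \<times> 'n"
  obtain i j where p: "p = (i, j)" by (cases p)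
  have d: "\<And>i. \<beta> i i = real CARD('n) * (of_bool (x i) - hat w x) + (\<Sum>k\<in>UNIV. P i k * \<beta> k k)"
    and o: "\<And>i j. i \<noteq> j \<Longrightarrow> \<beta> i j = real CARD('n) / 2 * (of_bool (x i) * of_bool (x j) - hat w x)
                 + 1/2 * (\<Sum>k\<in>UNIV. P i k * \<beta> k j) + 1/2 * (\<Sum>k\<in>UNIV. P j k * \<beta> i k)"
    and n: "(\<Sum>i\<in>UNIV. \<pi> i * \<beta> i i) = 0"
    using s unfolding beta_sys_def by blast+
  show "Lbeta (\<lambda>p. \<beta> (fst p) (snd p)) p = Fbeta x p"
  proof (cases "i = j")
    case True
    then show ?thesis using d[of i] n unfolding p Lbeta_def Fbeta_def by simp
  next
    case False
    then show ?thesis using o[OF False] unfolding p Lbeta_def Fbeta_def by simp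
  qed
qed

lemma imp_beta_sys:
  assumes "Lbeta v = Fbeta x"
  shows "beta_sys w x (\<lambda>i j. v (i, j))"
proof -
  have S0: "(\<Sum>k\<in>UNIV. \<pi> k * v (k, k)) = 0"
  proof -
    have "(\<Sum>k\<in>UNIV. \<pi> k * v (k, k)) = (\<Sum>i\<in>UNIV. \<pi> i * Lbeta v (i, i))" by (rule sum_pi_Lbeta[symmetric])
    also have "\<dots> = (\<Sum>i\<in>UNIV. \<pi> i * Fbeta x (i, i))" using assms by simp
    also have "\<dots> = 0" by (rule sum_pi_Fbeta)
    finally show ?thesis .
  qed
  have e: "Lbeta v p = Fbeta x p" for p using assms by simp
  show ?thesis unfolding beta_sys_def
  proof (intro conjI allI impI)
    fix i show "v (i, i) = real CARD('n) * (of_bool (x i) - hat w x) + (\<Sum>k\<in>UNIV. P i k * v (k, k))"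
      using e[of "(i, i)"] S0 unfolding Lbeta_def Fbeta_def by simp
  next
    fix i j :: 'n assume "i \<noteq> j"
    then show "v (i, j) = real CARD('n) / 2 * (of_bool (x i) * of_bool (x j) - hat w x) +
        1 / 2 * (\<Sum>k\<in>UNIV. P i k * v (k, j)) + 1 / 2 * (\<Sum>k\<in>UNIV. P j k * v (i, k))"
      using e[of "(i, j)"] unfolding Lbeta_def Fbeta_def by simp
  next
    show "(\<Sum>i\<in>UNIV. \<pi> i * v (i, i)) = 0" by (rule S0)
  qed
qed

lemma Lbeta_eq: "Lbeta u = Lbeta v \<Longrightarrow> u = v"
proof -
  assume "Lbeta u = Lbeta v"
  then have "Lbeta (\<lambda>p. u p - v p) = (\<lambda>_. 0)" by (simp add: Lbeta_diff)
  then have "(\<lambda>p. u p - v p) = (\<lambda>_. 0)" by (rule Lbeta_inj0)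
  then show "u = v" by (simp add: fun_eq_iff)
qed

lemma beta_ex1: "\<exists>!\<beta>. beta_sys w x \<beta>"
proof -
  obtain v where v: "Lbeta v = Fbeta x"
    using fin_lin_surj[of Lbeta "Fbeta x"] Lbeta_add Lbeta_sc Lbeta_inj0 by blast
  show ?thesis
  proof (rule ex1I[of _ "\<lambda>i j. v (i, j)"])
    show "beta_sys w x (\<lambda>i j. v (i, j))" by (rule imp_beta_sys[OF v])
    fix \<beta> assume "beta_sys w x \<beta>"
    then have "Lbeta (\<lambda>p. \<beta> (fst p) (snd p)) = Lbeta v" using v beta_sys_imp by simp
    then have "(\<lambda>p. \<beta> (fst p) (snd p)) = v" by (rule Lbeta_eq)
    then show "\<beta> = (\<lambda>i j. v (i, j))" by (auto simp: fun_eq_iff)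
  qed
qed

lemma betaT_sys: "beta_sys w x (betaT w x)"
  unfolding betaT_def by (rule theI'[OF beta_ex1])

lemma betaT_unique: "beta_sys w x \<beta> \<Longrightarrow> betaT w x = \<beta>"
  using beta_ex1 betaT_sys by blast

lemma Lbeta_betaT: "Lbeta (\<lambda>p. betaT w x (fst p) (snd p)) = Fbeta x"
  by (rule beta_sys_imp[OF betaT_sys])

lemma beta_avg:
  "E2 (\<lambda>y. betaT w y i j) x = betaT w x i j - (of_bool (x i) * of_bool (x j) - hat w x)"
proof -
  define c where "c q = 1 / real CARD('n) * P (fst q) (snd q)" for q :: "'n \<times> 'n"
  define f where "f q p = betaT w (x(fst q := x (snd q))) (fst p) (snd p)" for q p :: "'n \<times> 'n"
  define V1 where "V1 p = (\<Sum>q\<in>UNIV. c q * f q p)" for p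
  define V2 where "V2 p = betaT w x (fst p) (snd p) - (of_bool (x (fst p)) * of_bool (x (snd p)) - hat w x)" for p
  have V1E: "V1 p = E2 (\<lambda>y. betaT w y (fst p) (snd p)) x" for p
    unfolding V1_def E2_as_sum c_def f_def ..
  have LV1: "Lbeta V1 = (\<lambda>p. \<Sum>q\<in>UNIV. c q * Lbeta (f q) p)"
    unfolding V1_def by (rule L_sum[OF Lbeta_add Lbeta_sc]) simp
  have Lf: "Lbeta (f q) = Fbeta (x(fst q := x (snd q)))" for q
    unfolding f_def by (rule Lbeta_betaT)
  have LV1': "Lbeta V1 p = E2 (\<lambda>y. Fbeta y p) x" for p
    unfolding LV1 Lf E2_as_sum c_def ..
  define m where "m p = of_bool (x (fst p)) * of_bool (x (snd p)) - hat w x" for p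
  have LV2: "Lbeta V2 p = Fbeta x p - Lbeta m p" for p
  proof -
    have "V2 = (\<lambda>p. betaT w x (fst p) (snd p) - m p)" unfolding V2_def m_def by (simp add: fun_eq_iff)
    then show ?thesis by (simp add: Lbeta_diff Lbeta_betaT)
  qed
  have PS: "(\<Sum>k\<in>UNIV. P i k * (of_bool (x k) - hat w x)) = (\<Sum>k\<in>UNIV. P i k * of_bool (x k)) - hat w x" for i
    by (simp add: right_diff_distrib sum_subtractf sum_distrib_right[symmetric] P_sum)
  have PS2: "(\<Sum>k\<in>UNIV. P i k * (of_bool (x k) * of_bool (x j) - hat w x)) = (\<Sum>k\<in>UNIV. P i k * of_bool (x k)) * of_bool (x j) - hat w x" for i j
    by (simp add: right_diff_distrib sum_subtractf sum_distrib_right[symmetric] P_sum mult.assoc)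
  have PS3: "(\<Sum>k\<in>UNIV. P j k * (of_bool (x i) * of_bool (x k) - hat w x)) = of_bool (x i) * (\<Sum>k\<in>UNIV. P j k * of_bool (x k)) - hat w x" for i j
    by (simp add: right_diff_distrib sum_subtractf sum_distrib_right[symmetric] sum_distrib_left P_sum mult.left_commute)
  have piS: "(\<Sum>k\<in>UNIV. \<pi> k * (of_bool (x k) - hat w x)) = 0"
    by (simp add: right_diff_distrib sum_subtractf sum_distrib_right[symmetric] pi_sum hat_def)
  have "Lbeta V1 p = Lbeta V2 p" for p
  proof (cases p)
    case (Pair i j)
    show ?thesis
    proof (cases "i = j")
      case True
      have "Lbeta V1 p = E2 (\<lambda>y. real CARD('n) * (of_bool (y i) - hat w y)) x"
        unfolding LV1' Pair True Fbeta_def by simp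
      also have "\<dots> = real CARD('n) * (E2 (\<lambda>y. of_bool (y i)) x - E2 (hat w) x)"
        by (simp only: E2_scale E2_diff)
      also have "\<dots> = real CARD('n) * (of_bool (x i) - hat w x) + (\<Sum>l\<in>UNIV. P i l * of_bool (x l)) - of_bool (x i)"
        by (simp add: E2_xi E2_hat algebra_simps)
      also have "\<dots> = Lbeta V2 p"
        unfolding LV2 Pair True using PS[of i] PS[of j] piS by (simp add: Fbeta_def Lbeta_def m_def ofb_sq)
      finally show ?thesis .
    next
      case False
      have "Lbeta V1 p = E2 (\<lambda>y. real CARD('n) / 2 * (of_bool (y i) * of_bool (y j) - hat w y)) x"
        unfolding LV1' Pair using False by (simp add: Fbeta_def)
      also have "\<dots> = real CARD('n) / 2 * (E2 (\<lambda>y. of_bool (y i) * of_bool (y j)) x - E2 (hat w) x)"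
        by (simp only: E2_scale E2_diff)
      also have "\<dots> = real CARD('n) / 2 * (of_bool (x i) * of_bool (x j) - hat w x)
          - (of_bool (x i) * of_bool (x j) - 1/2 * (\<Sum>l\<in>UNIV. P i l * of_bool (x l)) * of_bool (x j)
             - 1/2 * (of_bool (x i) * (\<Sum>l\<in>UNIV. P j l * of_bool (x l))))"
        by (simp add: E2_xixj[OF False] E2_hat algebra_simps)
      also have "\<dots> = Lbeta V2 p"
        unfolding LV2 Pair using False PS2[of i j] PS3[of j i] by (simp add: Fbeta_def Lbeta_def m_def algebra_simps)
      finally show ?thesis .
    qed
  qed
  then have "V1 = V2" using Lbeta_eq by (metis ext)
  then have "V1 (i, j) = V2 (i, j)" by simp
  then show ?thesis unfolding V1E V2_def by simp
qed

end

context gr2 begin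

definition Lgamma :: "('n \<times> 'n \<Rightarrow> real) \<Rightarrow> ('n \<times> 'n \<Rightarrow> real)" where
  "Lgamma v = (\<lambda>(i, j). v (i, j) - Qop (\<lambda>a b. v (a, b)) i j + (\<Sum>k\<in>UNIV. g2.\<pi> k * v (k, k)))"

definition Fgamma :: "'n state \<Rightarrow> ('n \<times> 'n \<Rightarrow> real)" where
  "Fgamma s = (\<lambda>(i, j). real CARD('n) ^ 2 / (2 * real CARD('n) - 1) *
     (of_bool (snd s i) * of_bool (fst s j) - hat w1 (fst s) * hat w2 (snd s)))"

lemma Qop_add: "Qop (\<lambda>a b. u a b + v a b) i j = Qop u i j + Qop v i j"
  unfolding Qop_def by (simp add: sum.distrib distrib_left)

lemma Qop_sc: "Qop (\<lambda>a b. c * u a b) i j = c * Qop u i j"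
  unfolding Qop_def by (simp add: sum_distrib_left distrib_left mult.left_commute)

lemma Qop_const: "Qop (\<lambda>a b. c) i j = c"
proof -
  have s1: "(\<Sum>k1\<in>UNIV. \<Sum>k2\<in>UNIV. g2.P i k1 * g1.P j k2 * c) = c"
    by (simp add: sum_distrib_right[symmetric] sum_distrib_left[symmetric] mult.assoc g1.P_sum g2.P_sum)
  have s2: "(\<Sum>k\<in>UNIV. g2.P i k * c) = c" "(\<Sum>k\<in>UNIV. g1.P j k * c) = c"
    by (simp_all add: sum_distrib_right[symmetric] g1.P_sum g2.P_sum)
  have d: "2 * real CARD('n) - 1 \<noteq> 0" using N2 by simp
  have "1 / (2 * real CARD('n) - 1) * c + (real CARD('n) - 1) / (2 * real CARD('n) - 1) * (c + c)
      = (c * (2 * real CARD('n) - 1)) / (2 * real CARD('n) - 1)"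
    by (simp add: add_divide_distrib[symmetric] algebra_simps)
  also have "\<dots> = c" using d by simp
  finally show ?thesis unfolding Qop_def s1 s2 .
qed

lemma Lgamma_add: "Lgamma (\<lambda>p. u p + v p) = (\<lambda>p. Lgamma u p + Lgamma v p)"
  unfolding Lgamma_def by (rule ext) (auto simp: sum.distrib distrib_left Qop_add)

lemma Lgamma_sc: "Lgamma (\<lambda>p. c * u p) = (\<lambda>p. c * Lgamma u p)"
  unfolding Lgamma_def by (rule ext) (auto simp: sum_distrib_left right_diff_distrib distrib_left mult.left_commute Qop_sc)

lemma Lgamma_diff: "Lgamma (\<lambda>p. u p - v p) = (\<lambda>p. Lgamma u p - Lgamma v p)"
proof -
  have "Lgamma (\<lambda>p. u p - v p) = Lgamma (\<lambda>p. u p + (-1) * v p)" by simp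
  also have "\<dots> = (\<lambda>p. Lgamma u p + (-1) * Lgamma v p)" by (simp only: Lgamma_add Lgamma_sc)
  finally show ?thesis by simp
qed

lemma mu_sum_P2: "(\<Sum>i\<in>UNIV. \<Sum>j\<in>UNIV. g2.\<pi> i * g1.\<pi> j * (\<Sum>k\<in>UNIV. g2.P i k * v k j))
   = (\<Sum>i\<in>UNIV. \<Sum>j\<in>UNIV. g2.\<pi> i * g1.\<pi> j * v i j)"
proof -
  have "(\<Sum>i\<in>UNIV. \<Sum>j\<in>UNIV. g2.\<pi> i * g1.\<pi> j * (\<Sum>k\<in>UNIV. g2.P i k * v k j))
      = (\<Sum>j\<in>UNIV. g1.\<pi> j * (\<Sum>i\<in>UNIV. g2.\<pi> i * (\<Sum>k\<in>UNIV. g2.P i k * v k j)))"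
    by (subst sum.swap) (simp add: sum_distrib_left mult_ac)
  also have "\<dots> = (\<Sum>j\<in>UNIV. g1.\<pi> j * (\<Sum>k\<in>UNIV. g2.\<pi> k * v k j))"
    by (simp only: g2.piP)
  also have "\<dots> = (\<Sum>i\<in>UNIV. \<Sum>j\<in>UNIV. g2.\<pi> i * g1.\<pi> j * v i j)"
    by (subst sum.swap) (simp add: sum_distrib_left mult_ac)
  finally show ?thesis .
qed

lemma mu_sum_P1: "(\<Sum>i\<in>UNIV. \<Sum>j\<in>UNIV. g2.\<pi> i * g1.\<pi> j * (\<Sum>k\<in>UNIV. g1.P j k * v i k))
   = (\<Sum>i\<in>UNIV. \<Sum>j\<in>UNIV. g2.\<pi> i * g1.\<pi> j * v i j)"
proof -
  have "(\<Sum>i\<in>UNIV. \<Sum>j\<in>UNIV. g2.\<pi> i * g1.\<pi> j * (\<Sum>k\<in>UNIV. g1.P j k * v i k))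
      = (\<Sum>i\<in>UNIV. g2.\<pi> i * (\<Sum>j\<in>UNIV. g1.\<pi> j * (\<Sum>k\<in>UNIV. g1.P j k * v i k)))"
    by (simp add: sum_distrib_left mult_ac)
  also have "\<dots> = (\<Sum>i\<in>UNIV. g2.\<pi> i * (\<Sum>k\<in>UNIV. g1.\<pi> k * v i k))"
    by (simp only: g1.piP)
  also have "\<dots> = (\<Sum>i\<in>UNIV. \<Sum>j\<in>UNIV. g2.\<pi> i * g1.\<pi> j * v i j)"
    by (simp add: sum_distrib_left mult_ac)
  finally show ?thesis .
qed

lemma mu_sum_PP: "(\<Sum>i\<in>UNIV. \<Sum>j\<in>UNIV. g2.\<pi> i * g1.\<pi> j * (\<Sum>k1\<in>UNIV. \<Sum>k2\<in>UNIV. g2.P i k1 * g1.P j k2 * v k1 k2))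
   = (\<Sum>i\<in>UNIV. \<Sum>j\<in>UNIV. g2.\<pi> i * g1.\<pi> j * v i j)"
proof -
  have e: "(\<Sum>k1\<in>UNIV. \<Sum>k2\<in>UNIV. g2.P i k1 * g1.P j k2 * v k1 k2) = (\<Sum>k1\<in>UNIV. g2.P i k1 * (\<Sum>k2\<in>UNIV. g1.P j k2 * v k1 k2))" for i j
    by (simp add: sum_distrib_left mult_ac)
  have "(\<Sum>i\<in>UNIV. \<Sum>j\<in>UNIV. g2.\<pi> i * g1.\<pi> j * (\<Sum>k1\<in>UNIV. \<Sum>k2\<in>UNIV. g2.P i k1 * g1.P j k2 * v k1 k2))
     = (\<Sum>i\<in>UNIV. \<Sum>j\<in>UNIV. g2.\<pi> i * g1.\<pi> j * (\<Sum>k1\<in>UNIV. g2.P i k1 * (\<Sum>k2\<in>UNIV. g1.P j k2 * v k1 k2)))"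
    by (simp only: e)
  also have "\<dots> = (\<Sum>i\<in>UNIV. \<Sum>j\<in>UNIV. g2.\<pi> i * g1.\<pi> j * (\<Sum>k2\<in>UNIV. g1.P j k2 * v i k2))"
    by (rule mu_sum_P2)
  also have "\<dots> = (\<Sum>i\<in>UNIV. \<Sum>j\<in>UNIV. g2.\<pi> i * g1.\<pi> j * v i j)"
    by (rule mu_sum_P1)
  finally show ?thesis .
qed

lemma mu_sum1: "(\<Sum>i\<in>UNIV. \<Sum>j\<in>UNIV. g2.\<pi> i * g1.\<pi> j * c) = c"
  by (simp add: sum_distrib_right[symmetric] sum_distrib_left[symmetric] g1.pi_sum g2.pi_sum)

lemma mu_Q: "(\<Sum>i\<in>UNIV. \<Sum>j\<in>UNIV. g2.\<pi> i * g1.\<pi> j * Qop v i j) = (\<Sum>i\<in>UNIV. \<Sum>j\<in>UNIV. g2.\<pi> i * g1.\<pi> j * v i j)"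
proof -
  define c1 where "c1 = 1 / (2 * real CARD('n) - 1)"
  define c2 where "c2 = (real CARD('n) - 1) / (2 * real CARD('n) - 1)"
  have c12: "c1 + 2 * c2 = 1" unfolding c1_def c2_def using N2 by (simp add: field_simps)
  define S where "S = (\<Sum>i\<in>UNIV. \<Sum>j\<in>UNIV. g2.\<pi> i * g1.\<pi> j * v i j)"
  have "(\<Sum>i\<in>UNIV. \<Sum>j\<in>UNIV. g2.\<pi> i * g1.\<pi> j * Qop v i j)
     = c1 * (\<Sum>i\<in>UNIV. \<Sum>j\<in>UNIV. g2.\<pi> i * g1.\<pi> j * (\<Sum>k1\<in>UNIV. \<Sum>k2\<in>UNIV. g2.P i k1 * g1.P j k2 * v k1 k2))
       + c2 * (\<Sum>i\<in>UNIV. \<Sum>j\<in>UNIV. g2.\<pi> i * g1.\<pi> j * (\<Sum>k\<in>UNIV. g2.P i k * v k j))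
       + c2 * (\<Sum>i\<in>UNIV. \<Sum>j\<in>UNIV. g2.\<pi> i * g1.\<pi> j * (\<Sum>k\<in>UNIV. g1.P j k * v i k))"
    unfolding Qop_def c1_def[symmetric] c2_def[symmetric]
    by (simp add: distrib_left sum.distrib sum_distrib_left mult_ac)
  also have "\<dots> = c1 * S + c2 * S + c2 * S" unfolding S_def mu_sum_PP mu_sum_P1 mu_sum_P2 ..
  also have "\<dots> = S" using c12 by (metis distrib_right mult_2 mult_1 add.assoc)
  finally show ?thesis unfolding S_def .
qed

lemma sum_mu_Lgamma: "(\<Sum>i\<in>UNIV. \<Sum>j\<in>UNIV. g2.\<pi> i * g1.\<pi> j * Lgamma v (i, j)) = (\<Sum>k\<in>UNIV. g2.\<pi> k * v (k, k))"
proof -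
  have "(\<Sum>i\<in>UNIV. \<Sum>j\<in>UNIV. g2.\<pi> i * g1.\<pi> j * Lgamma v (i, j))
     = (\<Sum>i\<in>UNIV. \<Sum>j\<in>UNIV. g2.\<pi> i * g1.\<pi> j * v (i, j))
       - (\<Sum>i\<in>UNIV. \<Sum>j\<in>UNIV. g2.\<pi> i * g1.\<pi> j * Qop (\<lambda>a b. v (a, b)) i j)
       + (\<Sum>i\<in>UNIV. \<Sum>j\<in>UNIV. g2.\<pi> i * g1.\<pi> j * (\<Sum>k\<in>UNIV. g2.\<pi> k * v (k, k)))"
    unfolding Lgamma_def by (simp add: right_diff_distrib distrib_left sum.distrib sum_subtractf)
  also have "\<dots> = (\<Sum>k\<in>UNIV. g2.\<pi> k * v (k, k))"
    unfolding mu_Q mu_sum1 by simp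
  finally show ?thesis .
qed

lemma Lgamma_inj0:
  assumes "Lgamma v = (\<lambda>_. 0)"
  shows "v = (\<lambda>_. 0)"
proof -
  have L0: "Lgamma v p = 0" for p using assms by simp
  define S where "S = (\<Sum>k\<in>UNIV. g2.\<pi> k * v (k, k))"
  have "S = 0" using sum_mu_Lgamma[of v] L0 unfolding S_def by simp
  then have h: "(\<lambda>a b. v (a, b)) i j = Qop (\<lambda>a b. v (a, b)) i j" for i j
    using L0[of "(i, j)"] unfolding Lgamma_def S_def by simp
  have c: "v (i, j) = v (i', j')" for i j i' j'
    using Q_harm_const[of "\<lambda>a b. v (a, b)", OF h] by simp
  have "S = v (i, j)" for i j
  proof -
    have "S = (\<Sum>k\<in>UNIV. g2.\<pi> k * v (i, j))" unfolding S_def using c by metis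
    also have "\<dots> = v (i, j)" by (simp add: sum_distrib_right[symmetric] g2.pi_sum)
    finally show ?thesis .
  qed
  then show ?thesis using \<open>S = 0\<close> by (auto simp: fun_eq_iff)
qed

lemma Lgamma_eq: "Lgamma u = Lgamma v \<Longrightarrow> u = v"
proof -
  assume "Lgamma u = Lgamma v"
  then have "Lgamma (\<lambda>p. u p - v p) = (\<lambda>_. 0)" by (simp add: Lgamma_diff)
  then have "(\<lambda>p. u p - v p) = (\<lambda>_. 0)" by (rule Lgamma_inj0)
  then show "u = v" by (simp add: fun_eq_iff)
qed

lemma sum_mu_Fgamma: "(\<Sum>i\<in>UNIV. \<Sum>j\<in>UNIV. g2.\<pi> i * g1.\<pi> j * Fgamma s (i, j)) = 0"
proof -
  define a where "a = real CARD('n) ^ 2 / (2 * real CARD('n) - 1)"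
  have "(\<Sum>i\<in>UNIV. \<Sum>j\<in>UNIV. g2.\<pi> i * g1.\<pi> j * Fgamma s (i, j))
     = a * ((\<Sum>i\<in>UNIV. g2.\<pi> i * of_bool (snd s i)) * (\<Sum>j\<in>UNIV. g1.\<pi> j * of_bool (fst s j))
            - (\<Sum>i\<in>UNIV. \<Sum>j\<in>UNIV. g2.\<pi> i * g1.\<pi> j * (hat w1 (fst s) * hat w2 (snd s))))"
    unfolding Fgamma_def a_def[symmetric]
    by (simp add: right_diff_distrib sum_subtractf sum_distrib_left sum_product mult_ac)
  also have "\<dots> = 0" unfolding mu_sum1 by (simp add: hat_def)
  finally show ?thesis .
qed

lemma gamma_sys_imp:
  assumes s: "gamma_sys w1 w2 \<xi> \<gamma>"
  shows "Lgamma (\<lambda>p. \<gamma> (fst p) (snd p)) = Fgamma \<xi>"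
proof (rule ext)
  fix p :: "'n \<times> 'n"
  obtain i j where p: "p = (i, j)" by (cases p)
  have g: "\<forall>i j. \<gamma> i j =
        real CARD('n) ^ 2 / (2 * real CARD('n) - 1) *
          (of_bool (snd \<xi> i) * of_bool (fst \<xi> j) - hat w1 (fst \<xi>) * hat w2 (snd \<xi>))
      + 1 / (2 * real CARD('n) - 1) *
          (\<Sum>k1\<in>UNIV. \<Sum>k2\<in>UNIV. tprob w2 i k1 * tprob w1 j k2 * \<gamma> k1 k2)
      + (real CARD('n) - 1) / (2 * real CARD('n) - 1) *
          ((\<Sum>k\<in>UNIV. tprob w2 i k * \<gamma> k j) + (\<Sum>k\<in>UNIV. tprob w1 j k * \<gamma> i k))"
    and n: "(\<Sum>i\<in>UNIV. g2.\<pi> i * \<gamma> i i) = 0"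
    using s unfolding gamma_sys_def by blast+
  have e: "\<gamma> i j = Fgamma \<xi> (i, j) + Qop \<gamma> i j" for i j
    using g unfolding Fgamma_def Qop_def prod.case add.assoc by blast
  show "Lgamma (\<lambda>p. \<gamma> (fst p) (snd p)) p = Fgamma \<xi> p"
    using e[of i j] n unfolding p Lgamma_def by simp
qed

lemma imp_gamma_sys:
  assumes "Lgamma v = Fgamma \<xi>"
  shows "gamma_sys w1 w2 \<xi> (\<lambda>i j. v (i, j))"
proof -
  have S0: "(\<Sum>k\<in>UNIV. g2.\<pi> k * v (k, k)) = 0"
  proof -
    have "(\<Sum>k\<in>UNIV. g2.\<pi> k * v (k, k)) = (\<Sum>i\<in>UNIV. \<Sum>j\<in>UNIV. g2.\<pi> i * g1.\<pi> j * Lgamma v (i, j))"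
      by (rule sum_mu_Lgamma[symmetric])
    also have "\<dots> = (\<Sum>i\<in>UNIV. \<Sum>j\<in>UNIV. g2.\<pi> i * g1.\<pi> j * Fgamma \<xi> (i, j))" using assms by simp
    also have "\<dots> = 0" by (rule sum_mu_Fgamma)
    finally show ?thesis .
  qed
  have e: "Lgamma v p = Fgamma \<xi> p" for p using assms by simp
  show ?thesis unfolding gamma_sys_def
  proof (intro conjI allI)
    fix i j
    show "v (i, j) = real CARD('n) ^ 2 / (2 * real CARD('n) - 1) *
          (of_bool (snd \<xi> i) * of_bool (fst \<xi> j) - hat w1 (fst \<xi>) * hat w2 (snd \<xi>)) +
          1 / (2 * real CARD('n) - 1) * (\<Sum>k1\<in>UNIV. \<Sum>k2\<in>UNIV. g2.P i k1 * g1.P j k2 * v (k1, k2)) +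
          (real CARD('n) - 1) / (2 * real CARD('n) - 1) *
          ((\<Sum>k\<in>UNIV. g2.P i k * v (k, j)) + (\<Sum>k\<in>UNIV. g1.P j k * v (i, k)))"
      using e[of "(i, j)"] S0 unfolding Lgamma_def Fgamma_def Qop_def by simp
  next
    show "(\<Sum>i\<in>UNIV. g2.\<pi> i * v (i, i)) = 0" by (rule S0)
  qed
qed

lemma gamma_ex1: "\<exists>!\<gamma>. gamma_sys w1 w2 \<xi> \<gamma>"
proof -
  obtain v where v: "Lgamma v = Fgamma \<xi>"
    using fin_lin_surj[of Lgamma "Fgamma \<xi>"] Lgamma_add Lgamma_sc Lgamma_inj0 by blast
  show ?thesis
  proof (rule ex1I[of _ "\<lambda>i j. v (i, j)"])
    show "gamma_sys w1 w2 \<xi> (\<lambda>i j. v (i, j))" by (rule imp_gamma_sys[OF v])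
    fix \<gamma> assume "gamma_sys w1 w2 \<xi> \<gamma>"
    then have "Lgamma (\<lambda>p. \<gamma> (fst p) (snd p)) = Lgamma v" using v gamma_sys_imp by simp
    then have "(\<lambda>p. \<gamma> (fst p) (snd p)) = v" by (rule Lgamma_eq)
    then show "\<gamma> = (\<lambda>i j. v (i, j))" by (auto simp: fun_eq_iff)
  qed
qed

lemma gammaT_sys: "gamma_sys w1 w2 \<xi> (gammaT w1 w2 \<xi>)"
  unfolding gammaT_def by (rule theI'[OF gamma_ex1])

lemma gammaT_unique: "gamma_sys w1 w2 \<xi> \<gamma> \<Longrightarrow> gammaT w1 w2 \<xi> = \<gamma>"
  using gamma_ex1 gammaT_sys by blast

lemma Lgamma_gammaT: "Lgamma (\<lambda>p. gammaT w1 w2 \<xi> (fst p) (snd p)) = Fgamma \<xi>"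
  by (rule gamma_sys_imp[OF gammaT_sys])

end

lemma sum4_pairs:
  fixes F :: "'a::finite \<Rightarrow> 'b::finite \<Rightarrow> 'c::finite \<Rightarrow> 'd::finite \<Rightarrow> real"
  shows "(\<Sum>a\<in>UNIV. \<Sum>b\<in>UNIV. \<Sum>k\<in>UNIV. \<Sum>l\<in>UNIV. F a b k l) = (\<Sum>q\<in>UNIV. F (fst (fst q)) (snd (fst q)) (fst (snd q)) (snd (snd q)))"
proof -
  have "(\<Sum>q\<in>UNIV. F (fst (fst q)) (snd (fst q)) (fst (snd q)) (snd (snd q)))
     = (\<Sum>q\<in>(UNIV \<times> UNIV) \<times> (UNIV \<times> UNIV). F (fst (fst q)) (snd (fst q)) (fst (snd q)) (snd (snd q)))"
    by (simp only: UNIV_Times_UNIV)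
  also have "\<dots> = (\<Sum>a\<in>UNIV. \<Sum>b\<in>UNIV. \<Sum>k\<in>UNIV. \<Sum>l\<in>UNIV. F a b k l)"
    by (simp only: sum.cartesian_product' fst_conv snd_conv)
  finally show ?thesis by simp
qed
context gr2 begin

definition E12 :: "('n state \<Rightarrow> real) \<Rightarrow> 'n state \<Rightarrow> real" where
  "E12 G s = 1 / real CARD('n) ^ 2 * (\<Sum>a\<in>UNIV. \<Sum>b\<in>UNIV. \<Sum>k\<in>UNIV. \<Sum>l\<in>UNIV.
      g1.P a b * g2.P k l * G ((fst s)(a := fst s b), (snd s)(k := snd s l)))"

lemma sum4_prod:
  "(\<Sum>a\<in>UNIV. \<Sum>b\<in>UNIV. f a b) * (\<Sum>k\<in>UNIV. \<Sum>l\<in>UNIV. g k l)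
   = (\<Sum>a\<in>UNIV. \<Sum>b\<in>UNIV. \<Sum>k\<in>UNIV. \<Sum>l\<in>UNIV. (f a b * g k l :: real))"
proof -
  have "(\<Sum>a\<in>UNIV. \<Sum>b\<in>UNIV. f a b) * (\<Sum>k\<in>UNIV. \<Sum>l\<in>UNIV. g k l)
      = (\<Sum>a\<in>UNIV. \<Sum>b\<in>UNIV. f a b * (\<Sum>k\<in>UNIV. \<Sum>l\<in>UNIV. g k l))"
    by (simp only: sum_distrib_right)
  also have "\<dots> = (\<Sum>a\<in>UNIV. \<Sum>b\<in>UNIV. \<Sum>k\<in>UNIV. \<Sum>l\<in>UNIV. f a b * g k l)"
    by (simp only: sum_distrib_left)
  finally show ?thesis .
qed

lemma E12_prod: "E12 (\<lambda>u. G1 (fst u) * G2 (snd u)) s = g1.E2 G1 (fst s) * g2.E2 G2 (snd s)"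
proof -
  have "g1.E2 G1 (fst s) * g2.E2 G2 (snd s) = 1 / real CARD('n) ^ 2 *
     ((\<Sum>a\<in>UNIV. \<Sum>b\<in>UNIV. g1.P a b * G1 ((fst s)(a := fst s b))) * (\<Sum>k\<in>UNIV. \<Sum>l\<in>UNIV. g2.P k l * G2 ((snd s)(k := snd s l))))"
    unfolding g1.E2_def g2.E2_def by (simp add: power2_eq_square)
  also have "\<dots> = E12 (\<lambda>u. G1 (fst u) * G2 (snd u)) s"
    unfolding sum4_prod E12_def by (simp add: mult_ac)
  finally show ?thesis by simp
qed

lemma E12_as_sum: "E12 G s = (\<Sum>q\<in>UNIV. (1 / real CARD('n) ^ 2 * (g1.P (fst (fst q)) (snd (fst q)) * g2.P (fst (snd q)) (snd (snd q))))
    * G ((fst s)(fst (fst q) := fst s (snd (fst q))), (snd s)(fst (snd q) := snd s (snd (snd q)))))"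
proof -
  have "(\<Sum>a\<in>UNIV. \<Sum>b\<in>UNIV. \<Sum>k\<in>UNIV. \<Sum>l\<in>UNIV.
      g1.P a b * g2.P k l * G ((fst s)(a := fst s b), (snd s)(k := snd s l)))
    = (\<Sum>q\<in>UNIV. (g1.P (fst (fst q)) (snd (fst q)) * g2.P (fst (snd q)) (snd (snd q)))
    * G ((fst s)(fst (fst q) := fst s (snd (fst q))), (snd s)(fst (snd q) := snd s (snd (snd q)))))"
    by (rule sum4_pairs)
  then show ?thesis unfolding E12_def by (simp add: sum_distrib_left mult.assoc)
qed

lemma E12_add: "E12 (\<lambda>y. G y + H y) x = E12 G x + E12 H x"
  unfolding E12_def by (simp add: distrib_left sum.distrib)

lemma E12_scale: "E12 (\<lambda>y. c * G y) x = c * E12 G x"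
  unfolding E12_def by (simp add: sum_distrib_left algebra_simps)

lemma E12_diff: "E12 (\<lambda>y. G y - H y) x = E12 G x - E12 H x"
  unfolding E12_def by (simp add: right_diff_distrib sum_subtractf)

lemma E12_snd: "E12 (\<lambda>u. G (snd u)) s = g2.E2 G (snd s)"
  using E12_prod[of "\<lambda>_. 1" G s] by (simp add: g1.E2_const)

definition Cc :: "'n state \<Rightarrow> real" where
  "Cc s = (\<Sum>k\<in>UNIV. g2.\<pi> k * (of_bool (snd s k) * of_bool (fst s k)))"

lemma gamma_avg:
  "E12 (\<lambda>u. gammaT w1 w2 u i j) s = gammaT w1 w2 s i j - (of_bool (snd s i) * of_bool (fst s j) - Cc s)"
proof -
  define c where "c q = 1 / real CARD('n) ^ 2 * (g1.P (fst (fst q)) (snd (fst q)) * g2.P (fst (snd q)) (snd (snd q)))"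
    for q :: "('n \<times> 'n) \<times> ('n \<times> 'n)"
  define su where "su q = ((fst s)(fst (fst q) := fst s (snd (fst q))), (snd s)(fst (snd q) := snd s (snd (snd q))))"
    for q :: "('n \<times> 'n) \<times> ('n \<times> 'n)"
  define f where "f q p = gammaT w1 w2 (su q) (fst p) (snd p)" for q p
  define V1 where "V1 p = (\<Sum>q\<in>UNIV. c q * f q p)" for p
  define m where "m p = of_bool (snd s (fst p)) * of_bool (fst s (snd p)) - Cc s" for p
  define V2 where "V2 p = gammaT w1 w2 s (fst p) (snd p) - m p" for p
  have V1E: "V1 p = E12 (\<lambda>u. gammaT w1 w2 u (fst p) (snd p)) s" for p
    unfolding V1_def E12_as_sum c_def f_def su_def ..
  have LV1: "Lgamma V1 = (\<lambda>p. \<Sum>q\<in>UNIV. c q * Lgamma (f q) p)"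
    unfolding V1_def by (rule L_sum[OF Lgamma_add Lgamma_sc]) simp
  have Lf: "Lgamma (f q) = Fgamma (su q)" for q
    unfolding f_def by (rule Lgamma_gammaT)
  have LV1': "Lgamma V1 p = E12 (\<lambda>u. Fgamma u p) s" for p
    unfolding LV1 Lf E12_as_sum c_def su_def ..
  have LV2: "Lgamma V2 p = Fgamma s p - Lgamma m p" for p
  proof -
    have "V2 = (\<lambda>p. gammaT w1 w2 s (fst p) (snd p) - m p)" unfolding V2_def by (simp add: fun_eq_iff)
    then show ?thesis by (simp add: Lgamma_diff Lgamma_gammaT)
  qed
  have "Lgamma V1 p = Lgamma V2 p" for p
  proof (cases p)
    case (Pair i j)
    define X where "X = (of_bool (snd s i) :: real)"
    define Y where "Y = (of_bool (fst s j) :: real)"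
    define A where "A = (\<Sum>l\<in>UNIV. g2.P i l * of_bool (snd s l))"
    define B where "B = (\<Sum>l\<in>UNIV. g1.P j l * of_bool (fst s l))"
    define h where "h = hat w1 (fst s) * hat w2 (snd s)"
    define N where "N = real CARD('n)"
    have N2': "N \<ge> 2" unfolding N_def using N2 .
    have "Lgamma V1 p = N ^ 2 / (2 * N - 1) *
        (E12 (\<lambda>u. of_bool (fst u j) * of_bool (snd u i)) s - E12 (\<lambda>u. hat w1 (fst u) * hat w2 (snd u)) s)"
      unfolding LV1' Pair Fgamma_def N_def by (simp add: E12_scale[symmetric] E12_diff[symmetric] mult.commute)
    also have "E12 (\<lambda>u. of_bool (fst u j) * of_bool (snd u i)) s = g1.E2 (\<lambda>y. of_bool (y j)) (fst s) * g2.E2 (\<lambda>y. of_bool (y i)) (snd s)"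
      using E12_prod[of "\<lambda>y. of_bool (y j)" "\<lambda>y. of_bool (y i)" s] by simp
    also have "E12 (\<lambda>u. hat w1 (fst u) * hat w2 (snd u)) s = g1.E2 (hat w1) (fst s) * g2.E2 (hat w2) (snd s)"
      using E12_prod[of "hat w1" "hat w2" s] by simp
    also have "N ^ 2 / (2 * N - 1) * (g1.E2 (\<lambda>y. of_bool (y j)) (fst s) * g2.E2 (\<lambda>y. of_bool (y i)) (snd s) - g1.E2 (hat w1) (fst s) * g2.E2 (hat w2) (snd s))
       = N ^ 2 / (2 * N - 1) * ((Y + 1 / N * (B - Y)) * (X + 1 / N * (A - X)) - h)"
      unfolding g1.E2_xi g2.E2_xi g1.E2_hat g2.E2_hat X_def Y_def A_def B_def h_def N_def ..
    finally have L1: "Lgamma V1 p = N ^ 2 / (2 * N - 1) * ((Y + 1 / N * (B - Y)) * (X + 1 / N * (A - X)) - h)" .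
    have q1: "(\<Sum>k1\<in>UNIV. \<Sum>k2\<in>UNIV. g2.P i k1 * g1.P j k2 * m (k1, k2)) = A * B - Cc s"
    proof -
      have "(\<Sum>k1\<in>UNIV. \<Sum>k2\<in>UNIV. g2.P i k1 * g1.P j k2 * m (k1, k2))
          = (\<Sum>k1\<in>UNIV. \<Sum>k2\<in>UNIV. (g2.P i k1 * of_bool (snd s k1)) * (g1.P j k2 * of_bool (fst s k2)))
            - (\<Sum>k1\<in>UNIV. \<Sum>k2\<in>UNIV. g2.P i k1 * g1.P j k2 * Cc s)"
        unfolding m_def by (simp add: right_diff_distrib sum_subtractf mult_ac)
      also have "(\<Sum>k1\<in>UNIV. \<Sum>k2\<in>UNIV. (g2.P i k1 * of_bool (snd s k1)) * (g1.P j k2 * of_bool (fst s k2))) = A * B"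
        unfolding A_def B_def by (simp add: sum_product)
      also have "(\<Sum>k1\<in>UNIV. \<Sum>k2\<in>UNIV. g2.P i k1 * g1.P j k2 * Cc s) = Cc s"
        by (simp add: sum_distrib_right[symmetric] sum_distrib_left[symmetric] mult.assoc g1.P_sum g2.P_sum)
      finally show ?thesis .
    qed
    have q2: "(\<Sum>k\<in>UNIV. g2.P i k * m (k, j)) = A * Y - Cc s"
      unfolding m_def A_def Y_def
      by (simp add: right_diff_distrib sum_subtractf sum_distrib_right[symmetric] g2.P_sum mult.assoc)
    have q3: "(\<Sum>k\<in>UNIV. g1.P j k * m (i, k)) = X * B - Cc s"
      unfolding m_def X_def B_def
      by (simp add: right_diff_distrib sum_subtractf sum_distrib_right[symmetric] sum_distrib_left g1.P_sum mult.left_commute)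
    have q4: "(\<Sum>k\<in>UNIV. g2.\<pi> k * m (k, k)) = 0"
      unfolding m_def Cc_def
      by (simp add: right_diff_distrib sum_subtractf sum_distrib_right[symmetric] g2.pi_sum)
    have L2: "Lgamma V2 p = N ^ 2 / (2 * N - 1) * (X * Y - h)
        - (X * Y - Cc s - (1 / (2 * N - 1) * (A * B - Cc s) + (N - 1) / (2 * N - 1) * ((A * Y - Cc s) + (X * B - Cc s)))) "
    proof -
      have mij: "m (i, j) = X * Y - Cc s" unfolding m_def X_def Y_def by simp
      have Fij: "Fgamma s (i, j) = N ^ 2 / (2 * N - 1) * (X * Y - h)"
        unfolding Fgamma_def X_def Y_def h_def N_def by simp
      have "Lgamma V2 p = Fgamma s p - Lgamma m p" by (rule LV2)
      also have "\<dots> = Fgamma s (i, j) - (m (i, j) - Qop (\<lambda>a b. m (a, b)) i j + (\<Sum>k\<in>UNIV. g2.\<pi> k * m (k, k)))"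
        unfolding Pair Lgamma_def by simp
      also have "Qop (\<lambda>a b. m (a, b)) i j = 1 / (2 * N - 1) * (A * B - Cc s) + (N - 1) / (2 * N - 1) * ((A * Y - Cc s) + (X * B - Cc s))"
        unfolding Qop_def q1 q2 q3 N_def ..
      finally show ?thesis unfolding q4 mij Fij by simp
    qed
    have d: "2 * N - 1 > 0" using N2' by simp
    have Nz: "N \<noteq> 0" using N2' by simp
    define D where "D = 2 * N - 1"
    have Dz: "D \<noteq> 0" using d unfolding D_def by simp
    have e1: "N ^ 2 / (2 * N - 1) * ((Y + 1 / N * (B - Y)) * (X + 1 / N * (A - X)) - h)
       = (((N - 1) * Y + B) * ((N - 1) * X + A) - N ^ 2 * h) / D"
    proof -
      have "(Y + 1 / N * (B - Y)) * (X + 1 / N * (A - X)) = (((N - 1) * Y + B) * ((N - 1) * X + A)) / N ^ 2"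
        using Nz by (simp add: field_simps power2_eq_square)
      moreover have "2 * N - 1 \<noteq> 0" using d by simp
      ultimately show ?thesis unfolding D_def using Nz by (simp add: field_simps power2_eq_square)
    qed
    have e2: "N ^ 2 / (2 * N - 1) * (X * Y - h)
        - (X * Y - Cc s - (1 / (2 * N - 1) * (A * B - Cc s) + (N - 1) / (2 * N - 1) * ((A * Y - Cc s) + (X * B - Cc s))))
      = (N ^ 2 * (X * Y - h) - D * (X * Y - Cc s) + (A * B - Cc s) + (N - 1) * ((A * Y - Cc s) + (X * B - Cc s))) / D"
      unfolding D_def[symmetric] using Dz by (simp add: field_simps)
    have e3: "((N - 1) * Y + B) * ((N - 1) * X + A) - N ^ 2 * h
      = N ^ 2 * (X * Y - h) - D * (X * Y - Cc s) + (A * B - Cc s) + (N - 1) * ((A * Y - Cc s) + (X * B - Cc s))"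
      unfolding D_def by (simp add: algebra_simps power2_eq_square)
    show ?thesis unfolding L1 L2 e1 e2 e3 ..
  qed
  then have "V1 = V2" using Lgamma_eq by (metis ext)
  then have "V1 (i, j) = V2 (i, j)" by simp
  then show ?thesis unfolding V1E V2_def m_def by simp
qed

end

lemma sum_if_eq_mult:
  "(\<Sum>y\<in>(UNIV::'a::finite set). (if y = z then a else 0) * (G y :: real)) = a * G z"
proof -
  have "(\<Sum>y\<in>(UNIV::'a set). (if y = z then a else 0) * G y) = (\<Sum>y\<in>UNIV. if y = z then a * G y else 0)"
    by (rule sum.cong) auto
  then show ?thesis by simp
qed

lemma layer_exp:
  fixes w :: "'n::finite \<Rightarrow> 'n \<Rightarrow> real"
  shows "(\<Sum>y\<in>UNIV. layer_step w F x y * G y)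
    = 1 / real CARD('n) * (\<Sum>i\<in>UNIV. \<Sum>j\<in>UNIV. w i j * F j / (\<Sum>k\<in>UNIV. w i k * F k) * G (x(i := x j)))"
proof -
  define a where "a i j = w i j * F j / (\<Sum>k\<in>UNIV. w i k * F k)" for i j
  have "(\<Sum>y\<in>UNIV. layer_step w F x y * G y)
      = (\<Sum>y\<in>UNIV. 1 / real CARD('n) * (\<Sum>i\<in>UNIV. \<Sum>j\<in>UNIV. (if y = x(i := x j) then a i j else 0) * G y))"
    unfolding layer_step_def a_def by (simp add: sum_distrib_right mult.assoc)
  also have "\<dots> = 1 / real CARD('n) * (\<Sum>y\<in>UNIV. \<Sum>i\<in>UNIV. \<Sum>j\<in>UNIV. (if y = x(i := x j) then a i j else 0) * G y)"
    by (simp add: sum_distrib_left)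
  also have "(\<Sum>y\<in>UNIV. \<Sum>i\<in>UNIV. \<Sum>j\<in>UNIV. (if y = x(i := x j) then a i j else 0) * G y)
      = (\<Sum>i\<in>UNIV. \<Sum>y\<in>UNIV. \<Sum>j\<in>UNIV. (if y = x(i := x j) then a i j else 0) * G y)"
    by (rule sum.swap)
  also have "\<dots> = (\<Sum>i\<in>UNIV. \<Sum>j\<in>UNIV. \<Sum>y\<in>UNIV. (if y = x(i := x j) then a i j else 0) * G y)"
    by (rule sum.cong[OF refl], rule sum.swap)
  also have "\<dots> = (\<Sum>i\<in>UNIV. \<Sum>j\<in>UNIV. a i j * G (x(i := x j)))"
    by (simp only: sum_if_eq_mult)
  finally show ?thesis unfolding a_def .
qed

lemma layer_step_nz:
  assumes "layer_step w F x y \<noteq> 0"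
  shows "\<exists>i j. y = x(i := x j)"
proof (rule ccontr)
  assume "\<not> ?thesis"
  then have "(if y = x(i := x j) then w i j * F j / (\<Sum>k\<in>UNIV. w i k * F k) else 0) = 0" for i j by auto
  then have "layer_step w F x y = 0" unfolding layer_step_def by simp
  with assms show False by simp
qed

lemma layer_step_const:
  assumes "layer_step w F x y \<noteq> 0" and "\<forall>i. x i = v"
  shows "y = x"
proof -
  obtain i j where "y = x(i := x j)" using layer_step_nz[OF assms(1)] by blast
  then show ?thesis using assms(2) by (auto simp: fun_eq_iff)
qed

lemma sum_state: "(\<Sum>u\<in>UNIV. f u) = (\<Sum>u1\<in>UNIV. \<Sum>u2\<in>UNIV. (f (u1, u2) :: real))"
proof -
  have "(\<Sum>u\<in>UNIV. f u) = (\<Sum>u\<in>UNIV \<times> UNIV. f u)" by (simp only: UNIV_Times_UNIV)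
  also have "\<dots> = (\<Sum>u1\<in>UNIV. \<Sum>u2\<in>UNIV. f (u1, u2))" by (rule sum.cartesian_product')
  finally show ?thesis .
qed

lemma trans_exp:
  fixes w1 w2 :: "'n::finite \<Rightarrow> 'n \<Rightarrow> real" and b c r \<delta> :: real and s :: "'n state"
  defines "F \<equiv> fecundity b c r w1 \<delta> s"
  shows "(\<Sum>u\<in>UNIV. trans b c r w1 w2 \<delta> s u * G u)
    = 1 / real CARD('n) ^ 2 * (\<Sum>a\<in>UNIV. \<Sum>b'\<in>UNIV. \<Sum>k\<in>UNIV. \<Sum>l\<in>UNIV.
        (w1 a b' * F b' / (\<Sum>m\<in>UNIV. w1 a m * F m)) * (w2 k l * F l / (\<Sum>m\<in>UNIV. w2 k m * F m))
        * G ((fst s)(a := fst s b'), (snd s)(k := snd s l)))"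
proof -
  define H where "H u1 = 1 / real CARD('n) * (\<Sum>k\<in>UNIV. \<Sum>l\<in>UNIV.
        (w2 k l * F l / (\<Sum>m\<in>UNIV. w2 k m * F m)) * G (u1, (snd s)(k := snd s l)))" for u1
  have "(\<Sum>u\<in>UNIV. trans b c r w1 w2 \<delta> s u * G u)
      = (\<Sum>u1\<in>UNIV. layer_step w1 F (fst s) u1 * (\<Sum>u2\<in>UNIV. layer_step w2 F (snd s) u2 * G (u1, u2)))"
    unfolding sum_state[of "\<lambda>u. trans b c r w1 w2 \<delta> s u * G u"]
    unfolding trans_def F_def by (simp add: sum_distrib_left mult.assoc)
  also have "\<dots> = (\<Sum>u1\<in>UNIV. layer_step w1 F (fst s) u1 * H u1)"
    unfolding H_def by (simp only: layer_exp)
  also have "\<dots> = 1 / real CARD('n) * (\<Sum>a\<in>UNIV. \<Sum>b'\<in>UNIV. w1 a b' * F b' / (\<Sum>m\<in>UNIV. w1 a m * F m) * H ((fst s)(a := fst s b')))"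
    by (rule layer_exp)
  also have "\<dots> = 1 / real CARD('n) ^ 2 * (\<Sum>a\<in>UNIV. \<Sum>b'\<in>UNIV. \<Sum>k\<in>UNIV. \<Sum>l\<in>UNIV.
        (w1 a b' * F b' / (\<Sum>m\<in>UNIV. w1 a m * F m)) * (w2 k l * F l / (\<Sum>m\<in>UNIV. w2 k m * F m))
        * G ((fst s)(a := fst s b'), (snd s)(k := snd s l)))"
    unfolding H_def by (simp add: sum_distrib_left power2_eq_square mult_ac)
  finally show ?thesis .
qed

lemma fec0: "fecundity b c r w1 0 s = (\<lambda>_. 1)"
  unfolding fecundity_def by simp

lemma layer_step0_ge:
  fixes w :: "'n::finite \<Rightarrow> 'n \<Rightarrow> real"
  assumes "\<And>i j. w i j \<ge> 0" "\<And>i. (\<Sum>k\<in>UNIV. w i k) > 0"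
  shows "layer_step w (\<lambda>_. 1) x (x(a := x b')) \<ge> 1 / real CARD('n) * (w a b' / (\<Sum>k\<in>UNIV. w a k))"
proof -
  define g where "g i j = (if x(a := x b') = x(i := x j) then w i j * 1 / (\<Sum>k\<in>UNIV. w i k * 1) else 0)" for i j
  have g0: "g i j \<ge> 0" for i j unfolding g_def using assms by (auto intro: divide_nonneg_pos)
  have "g a b' \<le> (\<Sum>j\<in>UNIV. g a j)" by (rule member_le_sum) (auto simp: g0)
  also have "\<dots> \<le> (\<Sum>i\<in>UNIV. \<Sum>j\<in>UNIV. g i j)" by (rule member_le_sum) (auto simp: g0 sum_nonneg)
  finally have "g a b' \<le> (\<Sum>i\<in>UNIV. \<Sum>j\<in>UNIV. g i j)" .
  moreover have "g a b' = w a b' / (\<Sum>k\<in>UNIV. w a k)" unfolding g_def by simp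
  ultimately have "w a b' / (\<Sum>k\<in>UNIV. w a k) \<le> (\<Sum>i\<in>UNIV. \<Sum>j\<in>UNIV. g i j)" by simp
  then show ?thesis unfolding layer_step_def g_def[symmetric]
    by (intro mult_left_mono) auto
qed

locale model = gr2 w1 w2 for w1 w2 :: "'n::finite \<Rightarrow> 'n \<Rightarrow> real" +
  fixes b c r :: real
begin

abbreviation "T \<equiv> trans b c r w1 w2"

lemma T0_exp: "(\<Sum>u\<in>UNIV. T 0 s u * G u) = E12 G s"
  unfolding trans_exp E12_def fec0 tprob_def strength_def by simp

lemma T0_snd: "(\<Sum>u\<in>UNIV. T 0 s u * G (snd u)) = g2.E2 G (snd s)"
  unfolding T0_exp E12_snd ..

definition U :: real where "U = \<bar>c\<bar> + \<bar>b\<bar> + \<bar>r - 1\<bar> + 1"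

lemma U_pos: "U > 0" unfolding U_def by simp

lemma payoff_bound: "\<bar>payoff b c r w1 s i\<bar> \<le> U"
proof -
  have "\<bar>\<Sum>j\<in>UNIV. b * tprob w1 i j * of_bool (fst s j)\<bar> \<le> (\<Sum>j\<in>UNIV. \<bar>b\<bar> * tprob w1 i j)"
    by (rule order_trans[OF sum_abs]) (rule sum_mono, simp add: abs_mult g1.P_nonneg mult_left_mono)
  also have "\<dots> = \<bar>b\<bar>" by (simp add: sum_distrib_left[symmetric] g1.P_sum)
  finally have B: "\<bar>\<Sum>j\<in>UNIV. b * tprob w1 i j * of_bool (fst s j)\<bar> \<le> \<bar>b\<bar>" .
  have "\<bar>- c * of_bool (fst s i)\<bar> \<le> \<bar>c\<bar>" by (simp add: abs_mult)
  moreover have "\<bar>(r - 1) * of_bool (snd s i)\<bar> \<le> \<bar>r - 1\<bar>" by (simp add: abs_mult)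
  ultimately show ?thesis unfolding payoff_def U_def using B by linarith
qed

definition eps0 :: real where "eps0 = 1 / U"

lemma eps0_pos: "eps0 > 0" unfolding eps0_def using U_pos by simp

lemma fec_pos:
  assumes "0 \<le> \<delta>" "\<delta> < eps0"
  shows "fecundity b c r w1 \<delta> s i > 0"
proof -
  have "\<delta> * U < 1" using assms U_pos unfolding eps0_def by (simp add: field_simps)
  moreover have "\<bar>\<delta> * payoff b c r w1 s i\<bar> \<le> \<delta> * U"
    using payoff_bound[of s i] assms(1) by (simp add: abs_mult mult_left_mono)
  ultimately show ?thesis unfolding fecundity_def by linarith
qed

lemma denom_pos:
  fixes w :: "'n \<Rightarrow> 'n \<Rightarrow> real"
  assumes "\<And>j. F j > 0" "gr w"
  shows "(\<Sum>k\<in>UNIV. w i k * F k) > 0"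
proof -
  interpret g: gr w by (rule assms(2))
  obtain k where k: "w i k > 0" using g.exists_edge by blast
  have "w i k * F k \<le> (\<Sum>k\<in>UNIV. w i k * F k)"
    by (rule member_le_sum) (auto intro: mult_nonneg_nonneg less_imp_le assms(1) g.nonneg)
  moreover have "w i k * F k > 0" using k assms(1)[of k] by simp
  ultimately show ?thesis by linarith
qed

lemma layer_step_nonneg:
  fixes w :: "'n \<Rightarrow> 'n \<Rightarrow> real"
  assumes "\<And>j. F j > 0" "gr w"
  shows "layer_step w F x y \<ge> 0"
proof -
  interpret g: gr w by (rule assms(2))
  have dp: "(\<Sum>k\<in>UNIV. w i k * F k) > 0" for i by (rule denom_pos[OF assms])
  have t: "0 \<le> w i j * F j / (\<Sum>k\<in>UNIV. w i k * F k)" for i j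
    using dp[of i] assms(1)[of j] g.nonneg[of i j] by simp
  show ?thesis unfolding layer_step_def
    by (intro mult_nonneg_nonneg sum_nonneg) (auto simp: t)
qed

lemma layer_step_sum:
  fixes w :: "'n \<Rightarrow> 'n \<Rightarrow> real"
  assumes "\<And>j. F j > 0" "gr w"
  shows "(\<Sum>y\<in>UNIV. layer_step w F x y) = 1"
proof -
  have "(\<Sum>y\<in>UNIV. layer_step w F x y) = (\<Sum>y\<in>UNIV. layer_step w F x y * 1)" by simp
  also have "\<dots> = 1 / real CARD('n) * (\<Sum>i\<in>UNIV. \<Sum>j\<in>UNIV. w i j * F j / (\<Sum>k\<in>UNIV. w i k * F k) * 1)"
    by (rule layer_exp)
  also have "\<dots> = 1 / real CARD('n) * (\<Sum>i\<in>(UNIV::'n set). 1)"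
  proof -
    have dp: "(\<Sum>k\<in>UNIV. w i k * F k) > 0" for i by (rule denom_pos[OF assms])
    have "(\<Sum>j\<in>UNIV. w i j * F j / (\<Sum>k\<in>UNIV. w i k * F k) * 1) = 1" for i
      using dp[of i] by (simp add: sum_divide_distrib[symmetric])
    then show ?thesis by simp
  qed
  finally show ?thesis by simp
qed

lemma T_nonneg:
  assumes "0 \<le> \<delta>" "\<delta> < eps0"
  shows "T \<delta> s u \<ge> 0"
  unfolding trans_def using fec_pos[OF assms]
  by (intro mult_nonneg_nonneg layer_step_nonneg) (auto intro: g1.gr_axioms g2.gr_axioms)

lemma T_sum:
  assumes "0 \<le> \<delta>" "\<delta> < eps0"
  shows "(\<Sum>u\<in>UNIV. T \<delta> s u) = 1"
proof -
  have F: "\<And>j. fecundity b c r w1 \<delta> s j > 0" using fec_pos[OF assms] .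
  have "(\<Sum>u\<in>UNIV. T \<delta> s u) = (\<Sum>u1\<in>UNIV. layer_step w1 (fecundity b c r w1 \<delta> s) (fst s) u1
        * (\<Sum>u2\<in>UNIV. layer_step w2 (fecundity b c r w1 \<delta> s) (snd s) u2))"
    unfolding sum_state[of "T \<delta> s"] unfolding trans_def by (simp add: sum_distrib_left)
  also have "\<dots> = 1"
    using layer_step_sum[OF F g1.gr_axioms] layer_step_sum[OF F g2.gr_axioms] by simp
  finally show ?thesis .
qed

lemma T_closed:
  assumes "T \<delta> s u \<noteq> 0" "\<forall>i. snd s i = v"
  shows "snd u = snd s"
proof -
  have "layer_step w2 (fecundity b c r w1 \<delta> s) (snd s) (snd u) \<noteq> 0"
    using assms(1) unfolding trans_def by auto
  then show ?thesis using layer_step_const assms(2) by blast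
qed

end

context gr begin

lemma E2_sum: "finite A \<Longrightarrow> E2 (\<lambda>y. \<Sum>i\<in>A. f i y) x = (\<Sum>i\<in>A. E2 (f i) x)"
proof (induction A rule: finite_induct)
  case empty then show ?case using E2_const[of 0 x] by simp
next
  case (insert a F)
  have "E2 (\<lambda>y. \<Sum>i\<in>insert a F. f i y) x = E2 (\<lambda>y. f a y + (\<Sum>i\<in>F. f i y)) x"
    using insert by simp
  also have "\<dots> = E2 (f a) x + E2 (\<lambda>y. \<Sum>i\<in>F. f i y) x" by (rule E2_add)
  finally show ?case using insert by simp
qed

lemma M_sym: "\<pi> l * mpow P 2 l m = \<pi> m * mpow P 2 m l"
proof -
  have key: "(\<pi> l * P l k) * P k m = (\<pi> m * P m k) * P k l" for k
  proof -
    have a: "\<pi> l * P l k = \<pi> k * P k l" by (rule rev)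
    have b: "\<pi> k * P k m = \<pi> m * P m k" by (rule rev)
    have "(\<pi> l * P l k) * P k m = (\<pi> k * P k l) * P k m" using a by simp
    also have "\<dots> = P k l * (\<pi> k * P k m)" by (simp only: mult_ac)
    also have "\<dots> = P k l * (\<pi> m * P m k)" using b by simp
    also have "\<dots> = (\<pi> m * P m k) * P k l" by (simp only: mult_ac)
    finally show ?thesis .
  qed
  have "\<pi> l * mpow P 2 l m = (\<Sum>k\<in>UNIV. (\<pi> l * P l k) * P k m)"
    by (simp add: mpow2 sum_distrib_left mult.assoc)
  also have "\<dots> = (\<Sum>k\<in>UNIV. (\<pi> m * P m k) * P k l)" by (simp only: key)
  also have "\<dots> = \<pi> m * mpow P 2 m l"
    by (simp add: mpow2 sum_distrib_left mult.assoc)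
  finally show ?thesis .
qed

lemma B_rev: "(\<Sum>k\<in>UNIV. \<pi> k * ((\<Sum>m\<in>UNIV. P k m * f m) * (\<Sum>l\<in>UNIV. P k l * g l)))
   = (\<Sum>m\<in>UNIV. \<Sum>l\<in>UNIV. \<pi> m * mpow P 2 m l * f m * g l)"
proof -
  have "(\<Sum>k\<in>UNIV. \<pi> k * ((\<Sum>m\<in>UNIV. P k m * f m) * (\<Sum>l\<in>UNIV. P k l * g l)))
      = (\<Sum>k\<in>UNIV. \<Sum>l\<in>UNIV. \<Sum>m\<in>UNIV. (\<pi> k * P k m) * P k l * f m * g l)"
    by (simp add: sum_product sum_distrib_left mult_ac)
  also have "\<dots> = (\<Sum>l\<in>UNIV. \<Sum>k\<in>UNIV. \<Sum>m\<in>UNIV. (\<pi> k * P k m) * P k l * f m * g l)"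
    by (rule sum.swap)
  also have "\<dots> = (\<Sum>l\<in>UNIV. \<Sum>m\<in>UNIV. \<Sum>k\<in>UNIV. (\<pi> k * P k m) * P k l * f m * g l)"
    by (rule sum.cong[OF refl], rule sum.swap)
  also have "\<dots> = (\<Sum>l\<in>UNIV. \<Sum>m\<in>UNIV. (\<pi> m * (\<Sum>k\<in>UNIV. P m k * P k l)) * f m * g l)"
    by (simp add: rev sum_distrib_left sum_distrib_right mult_ac)
  also have "\<dots> = (\<Sum>m\<in>UNIV. \<Sum>l\<in>UNIV. (\<pi> m * (\<Sum>k\<in>UNIV. P m k * P k l)) * f m * g l)"
    by (rule sum.swap)
  also have "\<dots> = (\<Sum>m\<in>UNIV. \<Sum>l\<in>UNIV. \<pi> m * mpow P 2 m l * f m * g l)"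
    by (simp add: mpow2)
  finally show ?thesis .
qed

lemma pi_mpow_sum1: "(\<Sum>i\<in>UNIV. \<Sum>j\<in>UNIV. \<pi> i * mpow P n i j) = 1"
  by (simp add: sum_distrib_left[symmetric] mpow_sum pi_sum)

lemma mpow0: "mpow P 0 i j = of_bool (i = j)" by simp

end

context gr2 begin

lemma E12_sum: "finite A \<Longrightarrow> E12 (\<lambda>y. \<Sum>i\<in>A. f i y) x = (\<Sum>i\<in>A. E12 (f i) x)"
proof (induction A rule: finite_induct)
  case empty
  have "E12 (\<lambda>y. 0 * 0) x = 0 * E12 (\<lambda>y. 0) x" by (rule E12_scale)
  then show ?case by simp
next
  case (insert a F)
  have "E12 (\<lambda>y. \<Sum>i\<in>insert a F. f i y) x = E12 (\<lambda>y. f a y + (\<Sum>i\<in>F. f i y)) x"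
    using insert by simp
  also have "\<dots> = E12 (f a) x + E12 (\<lambda>y. \<Sum>i\<in>F. f i y) x" by (rule E12_add)
  finally show ?case using insert by simp
qed

definition Kp :: "nat \<Rightarrow> nat \<Rightarrow> 'n \<Rightarrow> 'n \<Rightarrow> real" where
  "Kp n m i j = (\<Sum>k\<in>UNIV. mpow g2.P n i k * mpow g1.P m k j)"

lemma Kp_sum: "(\<Sum>j\<in>UNIV. Kp n m i j) = 1"
proof -
  have "(\<Sum>j\<in>UNIV. Kp n m i j) = (\<Sum>k\<in>UNIV. mpow g2.P n i k * (\<Sum>j\<in>UNIV. mpow g1.P m k j))"
    unfolding Kp_def by (simp add: sum_distrib_left) (rule sum.swap)
  then show ?thesis by (simp add: g1.mpow_sum g2.mpow_sum)
qed

lemma phiT_Kp: "phiT w1 w2 s n m = (\<Sum>i\<in>UNIV. \<Sum>j\<in>UNIV. (g2.\<pi> i * Kp n m i j) * gammaT w1 w2 s i j)"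
  unfolding phiT_def Kp_def by simp

lemma thetaT_M: "thetaT w2 x n = (\<Sum>i\<in>UNIV. \<Sum>j\<in>UNIV. (g2.\<pi> i * mpow g2.P n i j) * betaT w2 x i j)"
  unfolding thetaT_def by simp

lemma E2_theta: "g2.E2 (\<lambda>y. thetaT w2 y n) x = thetaT w2 x n
   - ((\<Sum>i\<in>UNIV. \<Sum>j\<in>UNIV. g2.\<pi> i * mpow g2.P n i j * (of_bool (x i) * of_bool (x j))) - hat w2 x)"
proof -
  have "g2.E2 (\<lambda>y. thetaT w2 y n) x = (\<Sum>i\<in>UNIV. \<Sum>j\<in>UNIV. (g2.\<pi> i * mpow g2.P n i j) * g2.E2 (\<lambda>y. betaT w2 y i j) x)"
    unfolding thetaT_M by (simp only: g2.E2_sum[OF finite] g2.E2_scale)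
  also have "\<dots> = (\<Sum>i\<in>UNIV. \<Sum>j\<in>UNIV. (g2.\<pi> i * mpow g2.P n i j) * betaT w2 x i j)
     - ((\<Sum>i\<in>UNIV. \<Sum>j\<in>UNIV. g2.\<pi> i * mpow g2.P n i j * (of_bool (x i) * of_bool (x j)))
        - (\<Sum>i\<in>UNIV. \<Sum>j\<in>UNIV. g2.\<pi> i * mpow g2.P n i j) * hat w2 x)"
    by (simp add: g2.beta_avg right_diff_distrib sum_subtractf sum_distrib_right mult.assoc)
  finally show ?thesis unfolding thetaT_M g2.pi_mpow_sum1 by simp
qed

lemma pi_Kp_sum1: "(\<Sum>i\<in>UNIV. \<Sum>j\<in>UNIV. g2.\<pi> i * Kp n m i j) = 1"
  by (simp add: sum_distrib_left[symmetric] Kp_sum g2.pi_sum)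

lemma E12_phi: "E12 (\<lambda>u. phiT w1 w2 u n m) s = phiT w1 w2 s n m
   - ((\<Sum>i\<in>UNIV. \<Sum>j\<in>UNIV. g2.\<pi> i * Kp n m i j * (of_bool (snd s i) * of_bool (fst s j))) - Cc s)"
proof -
  have "E12 (\<lambda>u. phiT w1 w2 u n m) s = (\<Sum>i\<in>UNIV. \<Sum>j\<in>UNIV. (g2.\<pi> i * Kp n m i j) * E12 (\<lambda>u. gammaT w1 w2 u i j) s)"
    unfolding phiT_Kp by (simp only: E12_sum[OF finite] E12_scale)
  also have "\<dots> = (\<Sum>i\<in>UNIV. \<Sum>j\<in>UNIV. (g2.\<pi> i * Kp n m i j) * gammaT w1 w2 s i j)
     - ((\<Sum>i\<in>UNIV. \<Sum>j\<in>UNIV. g2.\<pi> i * Kp n m i j * (of_bool (snd s i) * of_bool (fst s j)))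
        - (\<Sum>i\<in>UNIV. \<Sum>j\<in>UNIV. g2.\<pi> i * Kp n m i j) * Cc s)"
    by (simp add: gamma_avg right_diff_distrib sum_subtractf sum_distrib_right mult.assoc)
  finally show ?thesis unfolding phiT_Kp pi_Kp_sum1 by simp
qed

end

context model begin

definition Psi :: "'n state \<Rightarrow> real" where
  "Psi s = 1 / real CARD('n) * (- (r - 1) * thetaT w2 (snd s) 2 + c * phiT w1 w2 s 2 0
      + b * (phiT w1 w2 s 0 1 - phiT w1 w2 s 2 1))"

definition Dp :: "'n state \<Rightarrow> real" where
  "Dp s = 1 / real CARD('n) * (\<Sum>k\<in>UNIV. g2.\<pi> k * (\<Sum>l\<in>UNIV. g2.P k l *
      (payoff b c r w1 s l - (\<Sum>m\<in>UNIV. g2.P k m * payoff b c r w1 s m)) * of_bool (snd s l)))"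

lemma E12_Psi: "E12 Psi s = Psi s - 1 / real CARD('n) * (
     - (r - 1) * ((\<Sum>i\<in>UNIV. \<Sum>j\<in>UNIV. g2.\<pi> i * mpow g2.P 2 i j * (of_bool (snd s i) * of_bool (snd s j))) - hat w2 (snd s))
     + c * ((\<Sum>i\<in>UNIV. \<Sum>j\<in>UNIV. g2.\<pi> i * Kp 2 0 i j * (of_bool (snd s i) * of_bool (fst s j))) - Cc s)
     + b * ((\<Sum>i\<in>UNIV. \<Sum>j\<in>UNIV. g2.\<pi> i * Kp 0 1 i j * (of_bool (snd s i) * of_bool (fst s j)))
          - (\<Sum>i\<in>UNIV. \<Sum>j\<in>UNIV. g2.\<pi> i * Kp 2 1 i j * (of_bool (snd s i) * of_bool (fst s j)))))"
proof -
  have th: "E12 (\<lambda>u. thetaT w2 (snd u) 2) s = g2.E2 (\<lambda>y. thetaT w2 y 2) (snd s)"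
    by (rule E12_snd)
  have "E12 Psi s = 1 / real CARD('n) * (- (r - 1) * E12 (\<lambda>u. thetaT w2 (snd u) 2) s + c * E12 (\<lambda>u. phiT w1 w2 u 2 0) s
      + b * (E12 (\<lambda>u. phiT w1 w2 u 0 1) s - E12 (\<lambda>u. phiT w1 w2 u 2 1) s))"
    unfolding Psi_def by (simp only: E12_scale E12_add E12_diff)
  then show ?thesis unfolding th E2_theta E12_phi Psi_def by (simp add: algebra_simps)
qed

end

context model begin

definition Rf :: "'n state \<Rightarrow> ('n \<Rightarrow> real) \<Rightarrow> real" where
  "Rf s f = (\<Sum>l\<in>UNIV. g2.\<pi> l * f l * of_bool (snd s l))
     - (\<Sum>m\<in>UNIV. \<Sum>l\<in>UNIV. g2.\<pi> m * mpow g2.P 2 m l * f m * of_bool (snd s l))"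

lemma Dp_Rf: "Dp s = 1 / real CARD('n) * Rf s (payoff b c r w1 s)"
proof -
  define u where "u = payoff b c r w1 s"
  define X where "X l = (of_bool (snd s l) :: real)" for l
  have e: "(\<Sum>l\<in>UNIV. g2.P k l * (u l - (\<Sum>m\<in>UNIV. g2.P k m * u m)) * X l)
      = (\<Sum>l\<in>UNIV. g2.P k l * (u l * X l)) - (\<Sum>m\<in>UNIV. g2.P k m * u m) * (\<Sum>l\<in>UNIV. g2.P k l * X l)" for k
  proof -
    define A where "A = (\<Sum>m\<in>UNIV. g2.P k m * u m)"
    have "(\<Sum>l\<in>UNIV. g2.P k l * (u l - A) * X l) = (\<Sum>l\<in>UNIV. g2.P k l * (u l * X l) - A * (g2.P k l * X l))"
      by (rule sum.cong) (simp_all add: algebra_simps)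
    also have "\<dots> = (\<Sum>l\<in>UNIV. g2.P k l * (u l * X l)) - A * (\<Sum>l\<in>UNIV. g2.P k l * X l)"
      by (simp add: sum_subtractf sum_distrib_left)
    finally show ?thesis unfolding A_def .
  qed
  have "(\<Sum>k\<in>UNIV. g2.\<pi> k * (\<Sum>l\<in>UNIV. g2.P k l * (u l - (\<Sum>m\<in>UNIV. g2.P k m * u m)) * X l))
      = (\<Sum>k\<in>UNIV. g2.\<pi> k * (\<Sum>l\<in>UNIV. g2.P k l * (u l * X l)))
        - (\<Sum>k\<in>UNIV. g2.\<pi> k * ((\<Sum>m\<in>UNIV. g2.P k m * u m) * (\<Sum>l\<in>UNIV. g2.P k l * X l)))"
    unfolding e by (simp only: right_diff_distrib sum_subtractf)
  also have "\<dots> = (\<Sum>l\<in>UNIV. g2.\<pi> l * (u l * X l)) - (\<Sum>m\<in>UNIV. \<Sum>l\<in>UNIV. g2.\<pi> m * mpow g2.P 2 m l * u m * X l)"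
    by (simp only: g2.piP g2.B_rev)
  finally show ?thesis unfolding Dp_def Rf_def u_def[symmetric] X_def by (simp add: mult.assoc)
qed

lemma Rf_lin: "Rf s (\<lambda>l. a1 * f1 l + a2 * f2 l + a3 * f3 l + a4 * f4 l) = a1 * Rf s f1 + a2 * Rf s f2 + a3 * Rf s f3 + a4 * Rf s f4"
  unfolding Rf_def by (simp add: algebra_simps sum.distrib sum_subtractf sum_distrib_left)

lemma Rf_1: "Rf s (\<lambda>l. 1) = 0"
proof -
  have "(\<Sum>m\<in>UNIV. \<Sum>l\<in>UNIV. g2.\<pi> m * mpow g2.P 2 m l * 1 * of_bool (snd s l))
      = (\<Sum>l\<in>UNIV. \<Sum>m\<in>UNIV. g2.\<pi> m * mpow g2.P 2 m l * of_bool (snd s l))"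
    by simp (rule sum.swap)
  also have "\<dots> = (\<Sum>l\<in>UNIV. g2.\<pi> l * of_bool (snd s l))"
    by (simp only: sum_distrib_right[symmetric] g2.mpow_stat)
  finally show ?thesis unfolding Rf_def by simp
qed

lemma payoff_split: "payoff b c r w1 s = (\<lambda>l. (-c) * of_bool (fst s l) + b * (\<Sum>j\<in>UNIV. g1.P l j * of_bool (fst s j))
     + (r - 1) * of_bool (snd s l) + 1 * 1)"
  unfolding payoff_def by (rule ext) (simp add: sum_distrib_left mult.assoc)

lemma Rf_payoff: "Rf s (payoff b c r w1 s) = (-c) * Rf s (\<lambda>l. of_bool (fst s l))
   + b * Rf s (\<lambda>l. \<Sum>j\<in>UNIV. g1.P l j * of_bool (fst s j)) + (r - 1) * Rf s (\<lambda>l. of_bool (snd s l))"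
proof -
  have "Rf s (payoff b c r w1 s) = (-c) * Rf s (\<lambda>l. of_bool (fst s l))
   + b * Rf s (\<lambda>l. \<Sum>j\<in>UNIV. g1.P l j * of_bool (fst s j)) + (r - 1) * Rf s (\<lambda>l. of_bool (snd s l)) + 1 * Rf s (\<lambda>l. 1)"
    unfolding payoff_split by (simp only: Rf_lin)
  then show ?thesis by (simp add: Rf_1)
qed

lemma Rf_X: "Rf s (\<lambda>l. of_bool (snd s l)) = hat w2 (snd s)
   - (\<Sum>i\<in>UNIV. \<Sum>j\<in>UNIV. g2.\<pi> i * mpow g2.P 2 i j * (of_bool (snd s i) * of_bool (snd s j)))"
  unfolding Rf_def hat_def by (simp add: mult.assoc ofb_sq)

lemma Rf_Y: "Rf s (\<lambda>l. of_bool (fst s l)) = Cc s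
   - (\<Sum>i\<in>UNIV. \<Sum>j\<in>UNIV. g2.\<pi> i * Kp 2 0 i j * (of_bool (snd s i) * of_bool (fst s j)))"
proof -
  have K: "Kp 2 0 i j = mpow g2.P 2 i j" for i j unfolding Kp_def by (simp add: sum_ofb_r)
  have "(\<Sum>m\<in>UNIV. \<Sum>l\<in>UNIV. g2.\<pi> m * mpow g2.P 2 m l * of_bool (fst s m) * of_bool (snd s l))
     = (\<Sum>m\<in>UNIV. \<Sum>l\<in>UNIV. g2.\<pi> l * mpow g2.P 2 l m * (of_bool (snd s l) * of_bool (fst s m)))"
    by (rule sum.cong[OF refl], rule sum.cong[OF refl]) (simp add: g2.M_sym[of _ "_"] mult_ac)
  also have "\<dots> = (\<Sum>l\<in>UNIV. \<Sum>m\<in>UNIV. g2.\<pi> l * mpow g2.P 2 l m * (of_bool (snd s l) * of_bool (fst s m)))"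
    by (rule sum.swap)
  finally show ?thesis unfolding Rf_def Cc_def K by (simp add: mult_ac)
qed

lemma Rf_Z: "Rf s (\<lambda>l. \<Sum>j\<in>UNIV. g1.P l j * of_bool (fst s j))
   = (\<Sum>i\<in>UNIV. \<Sum>j\<in>UNIV. g2.\<pi> i * Kp 0 1 i j * (of_bool (snd s i) * of_bool (fst s j)))
   - (\<Sum>i\<in>UNIV. \<Sum>j\<in>UNIV. g2.\<pi> i * Kp 2 1 i j * (of_bool (snd s i) * of_bool (fst s j)))"
proof -
  have K01: "Kp 0 1 i j = g1.P i j" for i j unfolding Kp_def by (simp add: sum_ofb_l sum_ofb_r g1.mpow1)
  have K21: "Kp 2 1 i j = (\<Sum>k\<in>UNIV. mpow g2.P 2 i k * g1.P k j)" for i j unfolding Kp_def by (simp add: sum_ofb_r)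
  have A: "(\<Sum>l\<in>UNIV. g2.\<pi> l * (\<Sum>j\<in>UNIV. g1.P l j * of_bool (fst s j)) * of_bool (snd s l))
     = (\<Sum>i\<in>UNIV. \<Sum>j\<in>UNIV. g2.\<pi> i * g1.P i j * (of_bool (snd s i) * of_bool (fst s j)))"
    by (simp add: sum_distrib_left sum_distrib_right mult_ac)
  have "(\<Sum>m\<in>UNIV. \<Sum>l\<in>UNIV. g2.\<pi> m * mpow g2.P 2 m l * (\<Sum>j\<in>UNIV. g1.P m j * of_bool (fst s j)) * of_bool (snd s l))
     = (\<Sum>m\<in>UNIV. \<Sum>l\<in>UNIV. \<Sum>j\<in>UNIV. g2.\<pi> l * mpow g2.P 2 l m * g1.P m j * (of_bool (snd s l) * of_bool (fst s j)))"
    by (rule sum.cong[OF refl], rule sum.cong[OF refl]) (simp add: g2.M_sym[of _ "_"] sum_distrib_left sum_distrib_right mult_ac)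
  also have "\<dots> = (\<Sum>l\<in>UNIV. \<Sum>m\<in>UNIV. \<Sum>j\<in>UNIV. g2.\<pi> l * mpow g2.P 2 l m * g1.P m j * (of_bool (snd s l) * of_bool (fst s j)))"
    by (rule sum.swap)
  also have "\<dots> = (\<Sum>l\<in>UNIV. \<Sum>j\<in>UNIV. \<Sum>m\<in>UNIV. g2.\<pi> l * mpow g2.P 2 l m * g1.P m j * (of_bool (snd s l) * of_bool (fst s j)))"
    by (rule sum.cong[OF refl], rule sum.swap)
  also have "\<dots> = (\<Sum>i\<in>UNIV. \<Sum>j\<in>UNIV. g2.\<pi> i * (\<Sum>k\<in>UNIV. mpow g2.P 2 i k * g1.P k j) * (of_bool (snd s i) * of_bool (fst s j)))"
    by (simp add: sum_distrib_left sum_distrib_right mult_ac)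
  finally have B: "(\<Sum>m\<in>UNIV. \<Sum>l\<in>UNIV. g2.\<pi> m * mpow g2.P 2 m l * (\<Sum>j\<in>UNIV. g1.P m j * of_bool (fst s j)) * of_bool (snd s l))
     = (\<Sum>i\<in>UNIV. \<Sum>j\<in>UNIV. g2.\<pi> i * (\<Sum>k\<in>UNIV. mpow g2.P 2 i k * g1.P k j) * (of_bool (snd s i) * of_bool (fst s j)))" .
  show ?thesis unfolding Rf_def A B K01 K21 ..
qed

lemma poisson: "Psi s - E12 Psi s = Dp s"
proof -
  have "Psi s - E12 Psi s = 1 / real CARD('n) * (
     - (r - 1) * ((\<Sum>i\<in>UNIV. \<Sum>j\<in>UNIV. g2.\<pi> i * mpow g2.P 2 i j * (of_bool (snd s i) * of_bool (snd s j))) - hat w2 (snd s))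
     + c * ((\<Sum>i\<in>UNIV. \<Sum>j\<in>UNIV. g2.\<pi> i * Kp 2 0 i j * (of_bool (snd s i) * of_bool (fst s j))) - Cc s)
     + b * ((\<Sum>i\<in>UNIV. \<Sum>j\<in>UNIV. g2.\<pi> i * Kp 0 1 i j * (of_bool (snd s i) * of_bool (fst s j)))
          - (\<Sum>i\<in>UNIV. \<Sum>j\<in>UNIV. g2.\<pi> i * Kp 2 1 i j * (of_bool (snd s i) * of_bool (fst s j)))))"
    unfolding E12_Psi by simp
  also have "\<dots> = Dp s"
    unfolding Dp_Rf Rf_payoff Rf_X Rf_Y Rf_Z by (simp add: algebra_simps)
  finally show ?thesis .
qed

end

context model begin

definition Aset :: "'n state set" where "Aset = {s'. \<forall>i. snd s' i}"

definition fseq :: "real \<Rightarrow> nat \<Rightarrow> 'n state \<Rightarrow> real" where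
  "fseq \<delta> t s = (\<Sum>s'\<in>Aset. nstep (T \<delta>) t s s')"

lemma rho2_fseq: "rho2 b c r w1 w2 \<delta> s = lim (\<lambda>t. fseq \<delta> t s)"
  unfolding rho2_def fseq_def Aset_def ..

lemma fseq_Suc: "fseq \<delta> (Suc t) s = (\<Sum>u\<in>UNIV. T \<delta> s u * fseq \<delta> t u)"
proof -
  have "fseq \<delta> (Suc t) s = (\<Sum>s'\<in>Aset. \<Sum>u\<in>UNIV. T \<delta> s u * nstep (T \<delta>) t u s')"
    unfolding fseq_def by simp
  also have "\<dots> = (\<Sum>u\<in>UNIV. \<Sum>s'\<in>Aset. T \<delta> s u * nstep (T \<delta>) t u s')"
    by (rule sum.swap)
  also have "\<dots> = (\<Sum>u\<in>UNIV. T \<delta> s u * fseq \<delta> t u)"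
    unfolding fseq_def by (simp add: sum_distrib_left)
  finally show ?thesis .
qed

lemma fseq_0: "fseq \<delta> 0 s = of_bool (s \<in> Aset)"
proof -
  have "fseq \<delta> 0 s = (\<Sum>s'\<in>Aset. of_bool (s = s'))" unfolding fseq_def by simp
  also have "\<dots> = of_bool (s \<in> Aset)"
    by (simp add: of_bool_def sum.If_cases[symmetric])
  finally show ?thesis .
qed

context
  fixes \<delta> :: real
  assumes dr: "0 \<le> \<delta>" "\<delta> < eps0"
begin

lemma T_closed_A: "s \<in> Aset \<Longrightarrow> T \<delta> s u \<noteq> 0 \<Longrightarrow> u \<in> Aset"
  unfolding Aset_def using T_closed[of \<delta> s u True] by auto

lemma T_closed_A0: "\<forall>i. \<not> snd s i \<Longrightarrow> T \<delta> s u \<noteq> 0 \<Longrightarrow> \<forall>i. \<not> snd u i"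
  using T_closed[of \<delta> s u False] by auto

lemma sumT_mono: "(\<And>u. f u \<le> g u) \<Longrightarrow> (\<Sum>u\<in>UNIV. T \<delta> s u * f u) \<le> (\<Sum>u\<in>UNIV. T \<delta> s u * g u)"
  by (rule sum_mono) (simp add: T_nonneg[OF dr] mult_left_mono)

lemma sumT_support: "(\<And>u. T \<delta> s u \<noteq> 0 \<Longrightarrow> f u = a) \<Longrightarrow> (\<Sum>u\<in>UNIV. T \<delta> s u * f u) = a"
proof -
  assume h: "\<And>u. T \<delta> s u \<noteq> 0 \<Longrightarrow> f u = a"
  have "(\<Sum>u\<in>UNIV. T \<delta> s u * f u) = (\<Sum>u\<in>UNIV. T \<delta> s u * a)"
    by (rule sum.cong[OF refl]) (metis h mult_zero_left)
  also have "\<dots> = a" by (simp add: sum_distrib_right[symmetric] T_sum[OF dr])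
  finally show ?thesis .
qed

lemma fseq_A: "s \<in> Aset \<Longrightarrow> fseq \<delta> t s = 1"
proof (induction t arbitrary: s)
  case 0 then show ?case by (simp add: fseq_0)
next
  case (Suc t)
  show ?case unfolding fseq_Suc by (rule sumT_support) (use Suc T_closed_A in blast)
qed

lemma fseq_A0: "\<forall>i. \<not> snd s i \<Longrightarrow> fseq \<delta> t s = 0"
proof (induction t arbitrary: s)
  case 0
  have "s \<notin> Aset" using 0 unfolding Aset_def by auto
  then show ?case by (simp add: fseq_0)
next
  case (Suc t)
  show ?case unfolding fseq_Suc by (rule sumT_support) (use Suc T_closed_A0 in blast)
qed

lemma fseq_nonneg: "fseq \<delta> t s \<ge> 0"
proof (induction t arbitrary: s)
  case 0 then show ?case by (simp add: fseq_0)
next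
  case (Suc t) then show ?case unfolding fseq_Suc by (simp add: sum_nonneg T_nonneg[OF dr])
qed

lemma fseq_le1: "fseq \<delta> t s \<le> 1"
proof (induction t arbitrary: s)
  case 0 then show ?case by (simp add: fseq_0)
next
  case (Suc t)
  show ?case unfolding fseq_Suc
    by (rule avg_le) (auto simp: T_nonneg[OF dr] T_sum[OF dr] Suc)
qed

lemma fseq_mono: "fseq \<delta> t s \<le> fseq \<delta> (Suc t) s"
proof (induction t arbitrary: s)
  case 0
  show ?case
  proof (cases "s \<in> Aset")
    case True then show ?thesis using fseq_A by simp
  next
    case False then show ?thesis using fseq_nonneg by (simp add: fseq_0)
  qed
next
  case (Suc t)
  have a: "fseq \<delta> (Suc (Suc t)) s = (\<Sum>u\<in>UNIV. T \<delta> s u * fseq \<delta> (Suc t) u)" by (rule fseq_Suc)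
  have b: "fseq \<delta> (Suc t) s = (\<Sum>u\<in>UNIV. T \<delta> s u * fseq \<delta> t u)" by (rule fseq_Suc)
  show ?case unfolding a b by (rule sumT_mono) (rule Suc)
qed

lemma fseq_lim: "(\<lambda>t. fseq \<delta> t s) \<longlonglongrightarrow> rho2 b c r w1 w2 \<delta> s"
proof -
  have "incseq (\<lambda>t. fseq \<delta> t s)" by (rule incseq_SucI) (rule fseq_mono)
  moreover have "bdd_above (range (\<lambda>t. fseq \<delta> t s))" by (rule bdd_aboveI[where M=1]) (auto simp: fseq_le1)
  ultimately have "convergent (\<lambda>t. fseq \<delta> t s)"
    using LIMSEQ_incseq_SUP convergent_def by blast
  then show ?thesis unfolding rho2_fseq by (rule convergent_LIMSEQ_iff[THEN iffD1])
qed

lemma rho_harm: "rho2 b c r w1 w2 \<delta> s = (\<Sum>u\<in>UNIV. T \<delta> s u * rho2 b c r w1 w2 \<delta> u)"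
proof -
  have "(\<lambda>t. fseq \<delta> (Suc t) s) \<longlonglongrightarrow> rho2 b c r w1 w2 \<delta> s"
    using fseq_lim by (rule LIMSEQ_Suc)
  moreover have "(\<lambda>t. fseq \<delta> (Suc t) s) \<longlonglongrightarrow> (\<Sum>u\<in>UNIV. T \<delta> s u * rho2 b c r w1 w2 \<delta> u)"
    unfolding fseq_Suc by (intro tendsto_sum tendsto_mult_left fseq_lim)
  ultimately show ?thesis by (rule LIMSEQ_unique)
qed

lemma rho_A: "s \<in> Aset \<Longrightarrow> rho2 b c r w1 w2 \<delta> s = 1"
  using fseq_lim[of s] fseq_A[of s] by (simp add: LIMSEQ_const_iff)

lemma rho_A0: "\<forall>i. \<not> snd s i \<Longrightarrow> rho2 b c r w1 w2 \<delta> s = 0"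
  using fseq_lim[of s] fseq_A0[of s] by (simp add: LIMSEQ_const_iff)

end

definition Xf :: "'n state \<Rightarrow> real" where "Xf s = hat w2 (snd s)"

lemma hat_const: "\<forall>i. x i = v \<Longrightarrow> hat w2 x = of_bool v"
  unfolding hat_def by (simp add: sum_distrib_right[symmetric] g2.pi_sum)

lemma hat1_const: "\<forall>i. x i = v \<Longrightarrow> hat w1 x = of_bool v"
  unfolding hat_def by (simp add: sum_distrib_right[symmetric] g1.pi_sum)

lemma rho_eq_X_full:
  assumes "0 \<le> \<delta>" "\<delta> < eps0" "monomorphic (snd s)"
  shows "rho2 b c r w1 w2 \<delta> s = Xf s"
proof (cases "\<forall>i. snd s i")
  case True
  then have "s \<in> Aset" unfolding Aset_def by simp
  then show ?thesis using rho_A[OF assms(1,2)] hat_const[of "snd s" True] True unfolding Xf_def by simp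
next
  case False
  then have "\<forall>i. \<not> snd s i" using assms(3) unfolding monomorphic_def by blast
  then show ?thesis using rho_A0[OF assms(1,2)] hat_const[of "snd s" False] unfolding Xf_def by simp
qed

lemma beta_zero:
  assumes "\<forall>i. x i = v"
  shows "betaT w2 x = (\<lambda>i j. 0)"
proof (rule g2.betaT_unique)
  have h: "hat w2 x = of_bool v" by (rule hat_const[OF assms])
  show "beta_sys w2 x (\<lambda>i j. 0)" unfolding beta_sys_def using assms h by simp
qed

lemma gamma_zero:
  assumes "\<forall>i. fst s i = v1" "\<forall>i. snd s i = v2"
  shows "gammaT w1 w2 s = (\<lambda>i j. 0)"
proof (rule gammaT_unique)
  have h1: "hat w1 (fst s) = of_bool v1" by (rule hat1_const[OF assms(1)])
  have h2: "hat w2 (snd s) = of_bool v2" by (rule hat_const[OF assms(2)])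
  show "gamma_sys w1 w2 s (\<lambda>i j. 0)" unfolding gamma_sys_def using assms h1 h2 by simp
qed

lemma Psi_full:
  assumes "monomorphic (fst s)" "monomorphic (snd s)"
  shows "Psi s = 0"
proof -
  obtain v1 where v1: "\<forall>i. fst s i = v1" using assms(1) unfolding monomorphic_def by blast
  obtain v2 where v2: "\<forall>i. snd s i = v2" using assms(2) unfolding monomorphic_def by blast
  have "thetaT w2 (snd s) n = 0" for n unfolding thetaT_def beta_zero[OF v2] by simp
  moreover have "phiT w1 w2 s n m = 0" for n m unfolding phiT_def gamma_zero[OF v1 v2] by simp
  ultimately show ?thesis unfolding Psi_def by simp
qed

end

context gr begin

definition mu :: "('n \<Rightarrow> bool) \<Rightarrow> nat" where
  "mu x = (if monomorphic x then 0 else CARD('n) - card {i. x i})"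

lemma mixed_edge:
  assumes "\<not> monomorphic x"
  shows "\<exists>k l. \<not> x k \<and> x l \<and> P k l > 0"
proof -
  obtain k0 where k0: "\<not> x k0" using assms unfolding monomorphic_def by blast
  obtain l0 where l0: "x l0" using assms unfolding monomorphic_def by blast
  have "(k0, z) \<in> {(a, b). P a b > 0}\<^sup>* \<Longrightarrow> x z \<longrightarrow> (\<exists>k l. \<not> x k \<and> x l \<and> P k l > 0)" for z
  proof (induction rule: rtrancl_induct)
    case base then show ?case using k0 by simp
  next
    case (step y z)
    show ?case
    proof (cases "x y")
      case True then show ?thesis using step by blast
    next
      case False then show ?thesis using step(2) by blast
    qed
  qed
  then show ?thesis using connP[of k0 l0] l0 by blast
qed

lemma step_exists:
  "\<exists>a b'. P a b' > 0 \<and> mu (x(a := x b')) \<le> mu x \<and> (\<not> monomorphic x \<longrightarrow> mu (x(a := x b')) < mu x)"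
proof (cases "monomorphic x")
  case True
  obtain k where k: "w undefined k > 0" using exists_edge by blast
  have "x(undefined := x k) = x" using True unfolding monomorphic_def by (auto simp: fun_eq_iff)
  then show ?thesis using k True P_pos_iff by (intro exI[of _ undefined] exI[of _ k]) auto
next
  case False
  obtain k l where kl: "\<not> x k" "x l" "P k l > 0" using mixed_edge[OF False] by blast
  define x' where "x' = x(k := x l)"
  have set': "{i. x' i} = insert k {i. x i}" unfolding x'_def using kl by auto
  have card': "card {i. x' i} = Suc (card {i. x i})" unfolding set' using kl(1) by simp
  have "card {i. x i} < CARD('n)"
  proof -
    have "{i. x i} \<subset> UNIV" using kl(1) by auto
    then show ?thesis by (simp add: psubset_card_mono)
  qed
  then have "mu x' < mu x"
    unfolding mu_def using False card' by auto
  then show ?thesis using kl(3) False unfolding x'_def by (intro exI[of _ k] exI[of _ l]) auto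
qed

end

context model begin

definition Full :: "'n state set" where
  "Full = {s. monomorphic (fst s) \<and> monomorphic (snd s)}"

abbreviation "mus s \<equiv> g1.mu (fst s) + g2.mu (snd s)"

lemma T0_pos_step:
  assumes "s \<notin> Full"
  shows "\<exists>u. T 0 s u > 0 \<and> mus u < mus s"
proof -
  obtain a1 b1 where m1: "g1.P a1 b1 > 0" "g1.mu ((fst s)(a1 := fst s b1)) \<le> g1.mu (fst s)"
    "\<not> monomorphic (fst s) \<longrightarrow> g1.mu ((fst s)(a1 := fst s b1)) < g1.mu (fst s)"
    using g1.step_exists by blast
  obtain a2 b2 where m2: "g2.P a2 b2 > 0" "g2.mu ((snd s)(a2 := snd s b2)) \<le> g2.mu (snd s)"
    "\<not> monomorphic (snd s) \<longrightarrow> g2.mu ((snd s)(a2 := snd s b2)) < g2.mu (snd s)"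
    using g2.step_exists by blast
  define u where "u = ((fst s)(a1 := fst s b1), (snd s)(a2 := snd s b2))"
  have l1: "layer_step w1 (\<lambda>_. 1) (fst s) (fst u) \<ge> 1 / real CARD('n) * (w1 a1 b1 / (\<Sum>k\<in>UNIV. w1 a1 k))"
    unfolding u_def fst_conv
    by (rule layer_step0_ge) (use g1.nonneg g1.strength_pos in \<open>auto simp: strength_def\<close>)
  have l2: "layer_step w2 (\<lambda>_. 1) (snd s) (snd u) \<ge> 1 / real CARD('n) * (w2 a2 b2 / (\<Sum>k\<in>UNIV. w2 a2 k))"
    unfolding u_def snd_conv
    by (rule layer_step0_ge) (use g2.nonneg g2.strength_pos in \<open>auto simp: strength_def\<close>)
  have p1: "1 / real CARD('n) * (w1 a1 b1 / (\<Sum>k\<in>UNIV. w1 a1 k)) > 0"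
    using m1(1) unfolding tprob_def strength_def by (intro mult_pos_pos) simp_all
  have p2: "1 / real CARD('n) * (w2 a2 b2 / (\<Sum>k\<in>UNIV. w2 a2 k)) > 0"
    using m2(1) unfolding tprob_def strength_def by (intro mult_pos_pos) simp_all
  have "T 0 s u > 0"
    unfolding trans_def fec0 using l1 l2 p1 p2 by (meson less_le_trans mult_pos_pos)
  moreover have "mus u < mus s"
    using m1(2,3) m2(2,3) assms unfolding u_def Full_def by auto
  ultimately show ?thesis by blast
qed

definition Lop :: "('n state \<Rightarrow> real) \<Rightarrow> ('n state \<Rightarrow> real)" where
  "Lop v s = (if s \<in> Full then v s else v s - (\<Sum>u\<in>UNIV. T 0 s u * v u))"

lemma Lop_add: "Lop (\<lambda>x. u x + v x) = (\<lambda>x. Lop u x + Lop v x)"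
  unfolding Lop_def by (rule ext) (simp add: distrib_left sum.distrib)

lemma Lop_sc: "Lop (\<lambda>x. k * u x) = (\<lambda>x. k * Lop u x)"
  unfolding Lop_def by (rule ext) (simp add: sum_distrib_left right_diff_distrib mult.left_commute)

lemma Lop_le:
  assumes L: "Lop v = (\<lambda>_. 0)"
  shows "v s \<le> 0"
proof (rule ccontr)
  assume "\<not> v s \<le> 0"
  define M where "M = Max (range v)"
  have le: "v x \<le> M" for x unfolding M_def by (rule Max_ge) auto
  have Mpos: "M > 0" using le[of s] \<open>\<not> v s \<le> 0\<close> by simp
  have "M \<in> range v" unfolding M_def by (rule Max_in) auto
  then obtain s0 where s0: "v s0 = M" by auto
  have "\<And>x. mus x = n \<Longrightarrow> v x = M \<Longrightarrow> False" for n
  proof (induction n rule: less_induct)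
    case (less n x)
    have Lx: "Lop v x = 0" using L by simp
    show False
    proof (cases "x \<in> Full")
      case True
      then have "v x = 0" using Lx unfolding Lop_def by simp
      then show False using less.prems Mpos by simp
    next
      case False
      have avg: "(\<Sum>u\<in>UNIV. T 0 x u * v u) = M" using Lx False less.prems unfolding Lop_def by simp
      obtain u where u: "T 0 x u > 0" "mus u < mus x" using T0_pos_step[OF False] by blast
      have "v u = M"
        by (rule avg_max[of UNIV "T 0 x" v M]) (use avg u eps0_pos in \<open>auto simp: T_nonneg T_sum le\<close>)
      then show False using less.IH[of "mus u" u] u(2) less.prems by simp
    qed
  qed
  then show False using s0 by blast
qed

lemma Lop_inj0:
  assumes "Lop v = (\<lambda>_. 0)"
  shows "v = (\<lambda>_. 0)"
proof -
  have a: "v s \<le> 0" for s using Lop_le[OF assms] .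
  have "Lop (\<lambda>x. (-1) * v x) = (\<lambda>x. (-1) * Lop v x)" by (rule Lop_sc)
  then have "Lop (\<lambda>x. - v x) = (\<lambda>_. 0)" using assms by simp
  then have b: "- v s \<le> 0" for s using Lop_le by blast
  show ?thesis using a b by (auto simp: fun_eq_iff intro: antisym)
qed

lemma Lop_bound: "\<exists>C>0. \<forall>v s. \<bar>v s\<bar> \<le> C * (\<Sum>s'\<in>UNIV. \<bar>Lop v s'\<bar>)"
  by (rule fin_lin_bound[OF Lop_add Lop_sc Lop_inj0])

end

lemma DERIV_if_const:
  "(f has_real_derivative D) F \<Longrightarrow> ((\<lambda>x. if C then f x else 0) has_real_derivative (if C then D else 0)) F"
  by (cases C) auto

context gr begin

lemma e_deriv:
  "((\<lambda>\<delta>. w i j * (1 + \<delta> * p j) / (\<Sum>k\<in>UNIV. w i k * (1 + \<delta> * p k)))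
     has_real_derivative P i j * (p j - (\<Sum>k\<in>UNIV. P i k * p k))) (at 0)"
proof -
  define S where "S = strength w i"
  have Spos: "S > 0" unfolding S_def by (rule strength_pos)
  have f: "((\<lambda>\<delta>. w i j * (1 + \<delta> * p j)) has_real_derivative w i j * p j) (at 0)"
    by (auto intro!: derivative_eq_intros)
  have g: "((\<lambda>\<delta>. \<Sum>k\<in>UNIV. w i k * (1 + \<delta> * p k)) has_real_derivative (\<Sum>k\<in>UNIV. w i k * p k)) (at 0)"
    by (auto intro!: derivative_eq_intros simp: mult.commute)
  have g0: "(\<Sum>k\<in>UNIV. w i k * (1 + 0 * p k)) = S" unfolding S_def strength_def by simp
  have q: "((\<lambda>\<delta>. w i j * (1 + \<delta> * p j) / (\<Sum>k\<in>UNIV. w i k * (1 + \<delta> * p k))) has_real_derivative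
     (w i j * p j * S - (\<Sum>k\<in>UNIV. w i k * p k) * (w i j * (1 + 0 * p j))) / S ^ Suc (Suc 0)) (at 0)"
    using DERIV_quotient[OF f g] g0 Spos by simp
  have "(\<Sum>k\<in>UNIV. P i k * p k) = (\<Sum>k\<in>UNIV. w i k * p k) / S"
    unfolding tprob_def S_def by (simp add: sum_divide_distrib)
  then have "(w i j * p j * S - (\<Sum>k\<in>UNIV. w i k * p k) * (w i j * (1 + 0 * p j))) / S ^ Suc (Suc 0)
      = P i j * (p j - (\<Sum>k\<in>UNIV. P i k * p k))"
    unfolding tprob_def S_def[symmetric] using Spos by (simp add: field_simps power2_eq_square)
  then show ?thesis using q by simp
qed

lemma layer_deriv:
  "\<exists>D. ((\<lambda>\<delta>. layer_step w (\<lambda>j. 1 + \<delta> * p j) x y) has_real_derivative D) (at 0)"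
proof -
  have "((\<lambda>\<delta>. 1 / real CARD('n) * (\<Sum>i\<in>UNIV. \<Sum>j\<in>UNIV.
      if y = x(i := x j) then w i j * (1 + \<delta> * p j) / (\<Sum>k\<in>UNIV. w i k * (1 + \<delta> * p k)) else 0))
    has_real_derivative 1 / real CARD('n) * (\<Sum>i\<in>UNIV. \<Sum>j\<in>UNIV.
      if y = x(i := x j) then P i j * (p j - (\<Sum>k\<in>UNIV. P i k * p k)) else 0)) (at 0)"
    by (intro DERIV_cmult DERIV_sum DERIV_if_const e_deriv)
  then show ?thesis unfolding layer_step_def by blast
qed

end

context model begin

lemma fec_form: "fecundity b c r w1 \<delta> s = (\<lambda>j. 1 + \<delta> * payoff b c r w1 s j)"
  unfolding fecundity_def ..

lemma T_deriv: "\<exists>D. ((\<lambda>\<delta>. T \<delta> s u) has_real_derivative D) (at 0)"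
proof -
  obtain D1 where D1: "((\<lambda>\<delta>. layer_step w1 (\<lambda>j. 1 + \<delta> * payoff b c r w1 s j) (fst s) (fst u)) has_real_derivative D1) (at 0)"
    using g1.layer_deriv by blast
  obtain D2 where D2: "((\<lambda>\<delta>. layer_step w2 (\<lambda>j. 1 + \<delta> * payoff b c r w1 s j) (snd s) (snd u)) has_real_derivative D2) (at 0)"
    using g2.layer_deriv by blast
  show ?thesis unfolding trans_def fec_form using DERIV_mult[OF D1 D2] by blast
qed

definition e2 :: "real \<Rightarrow> 'n state \<Rightarrow> 'n \<Rightarrow> 'n \<Rightarrow> real" where
  "e2 \<delta> s k l = w2 k l * (1 + \<delta> * payoff b c r w1 s l) / (\<Sum>m\<in>UNIV. w2 k m * (1 + \<delta> * payoff b c r w1 s m))"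

definition Gs :: "real \<Rightarrow> 'n state \<Rightarrow> real" where
  "Gs \<delta> s = 1 / real CARD('n) * (\<Sum>k\<in>UNIV. g2.\<pi> k * ((\<Sum>l\<in>UNIV. e2 \<delta> s k l * of_bool (snd s l)) - of_bool (snd s k)))"

lemma Gs_deriv: "((\<lambda>\<delta>. Gs \<delta> s) has_real_derivative Dp s) (at 0)"
proof -
  have "((\<lambda>\<delta>. Gs \<delta> s) has_real_derivative 1 / real CARD('n) * (\<Sum>k\<in>UNIV. g2.\<pi> k * ((\<Sum>l\<in>UNIV.
       g2.P k l * (payoff b c r w1 s l - (\<Sum>m\<in>UNIV. g2.P k m * payoff b c r w1 s m)) * of_bool (snd s l)) - 0))) (at 0)"
    unfolding Gs_def e2_def
    by (intro DERIV_cmult DERIV_sum DERIV_diff DERIV_cmult_right g2.e_deriv DERIV_const)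
  then show ?thesis unfolding Dp_def by simp
qed

lemma Gs0: "Gs 0 s = 0"
proof -
  have "e2 0 s k l = g2.P k l" for k l unfolding e2_def tprob_def strength_def by simp
  then have "Gs 0 s = 1 / real CARD('n) * ((\<Sum>k\<in>UNIV. g2.\<pi> k * (\<Sum>l\<in>UNIV. g2.P k l * of_bool (snd s l))) - (\<Sum>k\<in>UNIV. g2.\<pi> k * of_bool (snd s k)))"
    unfolding Gs_def by (simp add: right_diff_distrib sum_subtractf)
  then show ?thesis by (simp only: g2.piP) simp
qed

lemma TX_form:
  assumes "0 \<le> \<delta>" "\<delta> < eps0"
  shows "(\<Sum>u\<in>UNIV. T \<delta> s u * Xf u) = Xf s + Gs \<delta> s"
proof -
  define F where "F = fecundity b c r w1 \<delta> s"
  have Fpos: "F j > 0" for j unfolding F_def by (rule fec_pos[OF assms])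
  define e1 where "e1 a b' = w1 a b' * F b' / (\<Sum>m\<in>UNIV. w1 a m * F m)" for a b'
  have e2F: "e2 \<delta> s k l = w2 k l * F l / (\<Sum>m\<in>UNIV. w2 k m * F m)" for k l
    unfolding e2_def F_def fec_form ..
  have dp1: "(\<Sum>m\<in>UNIV. w1 a m * F m) > 0" for a by (rule denom_pos[OF Fpos g1.gr_axioms])
  have dp2: "(\<Sum>m\<in>UNIV. w2 a m * F m) > 0" for a by (rule denom_pos[OF Fpos g2.gr_axioms])
  have s1: "(\<Sum>a\<in>UNIV. \<Sum>b'\<in>UNIV. e1 a b') = real CARD('n)"
  proof -
    have "(\<Sum>b'\<in>UNIV. e1 a b') = 1" for a using dp1[of a] unfolding e1_def by (simp add: sum_divide_distrib[symmetric])
    then show ?thesis by simp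
  qed
  have s2row: "(\<Sum>l\<in>UNIV. e2 \<delta> s k l) = 1" for k using dp2[of k] unfolding e2F by (simp add: sum_divide_distrib[symmetric])
  have s2: "(\<Sum>k\<in>UNIV. \<Sum>l\<in>UNIV. e2 \<delta> s k l * hat w2 ((snd s)(k := snd s l)))
       = real CARD('n) * hat w2 (snd s) + (\<Sum>k\<in>UNIV. g2.\<pi> k * ((\<Sum>l\<in>UNIV. e2 \<delta> s k l * of_bool (snd s l)) - of_bool (snd s k)))"
  proof -
    have "(\<Sum>l\<in>UNIV. e2 \<delta> s k l * hat w2 ((snd s)(k := snd s l)))
        = hat w2 (snd s) + g2.\<pi> k * ((\<Sum>l\<in>UNIV. e2 \<delta> s k l * of_bool (snd s l)) - of_bool (snd s k))" for k
    proof -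
      have "(\<Sum>l\<in>UNIV. e2 \<delta> s k l * hat w2 ((snd s)(k := snd s l)))
          = (\<Sum>l\<in>UNIV. e2 \<delta> s k l * hat w2 (snd s) + g2.\<pi> k * (e2 \<delta> s k l * of_bool (snd s l)) - g2.\<pi> k * of_bool (snd s k) * e2 \<delta> s k l)"
        by (rule sum.cong) (simp_all add: g2.hat_upd algebra_simps)
      also have "\<dots> = hat w2 (snd s) * (\<Sum>l\<in>UNIV. e2 \<delta> s k l) + g2.\<pi> k * (\<Sum>l\<in>UNIV. e2 \<delta> s k l * of_bool (snd s l))
          - g2.\<pi> k * of_bool (snd s k) * (\<Sum>l\<in>UNIV. e2 \<delta> s k l)"
        by (simp add: sum.distrib sum_subtractf sum_distrib_left mult_ac)
      finally show ?thesis by (simp add: s2row algebra_simps)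
    qed
    then show ?thesis by (simp add: sum.distrib)
  qed
  have "(\<Sum>u\<in>UNIV. T \<delta> s u * Xf u)
      = 1 / real CARD('n) ^ 2 * (\<Sum>a\<in>UNIV. \<Sum>b'\<in>UNIV. \<Sum>k\<in>UNIV. \<Sum>l\<in>UNIV.
        e1 a b' * (e2 \<delta> s k l * hat w2 ((snd s)(k := snd s l))))"
    unfolding trans_exp Xf_def e1_def e2F F_def by (simp add: mult.assoc)
  also have "\<dots> = 1 / real CARD('n) ^ 2 * ((\<Sum>a\<in>UNIV. \<Sum>b'\<in>UNIV. e1 a b')
        * (\<Sum>k\<in>UNIV. \<Sum>l\<in>UNIV. e2 \<delta> s k l * hat w2 ((snd s)(k := snd s l))))"
    by (simp only: sum4_prod)
  also have "\<dots> = Xf s + Gs \<delta> s"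
    unfolding s1 s2 Gs_def Xf_def by (simp add: field_simps power2_eq_square)
  finally show ?thesis .
qed

end

context model begin

definition dd :: "real \<Rightarrow> 'n state \<Rightarrow> real" where
  "dd \<delta> s = rho2 b c r w1 w2 \<delta> s - Xf s - \<delta> * Psi s"

definition ee :: "real \<Rightarrow> 'n state \<Rightarrow> real" where
  "ee \<delta> s = ((\<Sum>u\<in>UNIV. T \<delta> s u * Xf u) - Xf s - \<delta> * Dp s) + \<delta> * (\<Sum>u\<in>UNIV. (T \<delta> s u - T 0 s u) * Psi u)"

lemma dd_rec:
  assumes "0 \<le> \<delta>" "\<delta> < eps0"
  shows "dd \<delta> s = (\<Sum>u\<in>UNIV. T \<delta> s u * dd \<delta> u) + ee \<delta> s"
proof -
  define R where "R = rho2 b c r w1 w2 \<delta>"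
  have h: "R s = (\<Sum>u\<in>UNIV. T \<delta> s u * R u)" unfolding R_def by (rule rho_harm[OF assms])
  have p: "Psi s - (\<Sum>u\<in>UNIV. T 0 s u * Psi u) = Dp s" using poisson[of s] unfolding T0_exp .
  have e1: "(\<Sum>u\<in>UNIV. T \<delta> s u * dd \<delta> u) = (\<Sum>u\<in>UNIV. T \<delta> s u * R u) - (\<Sum>u\<in>UNIV. T \<delta> s u * Xf u) - \<delta> * (\<Sum>u\<in>UNIV. T \<delta> s u * Psi u)"
    unfolding dd_def R_def[symmetric] by (simp add: right_diff_distrib sum_subtractf sum_distrib_left mult.left_commute)
  have e2: "(\<Sum>u\<in>UNIV. (T \<delta> s u - T 0 s u) * Psi u) = (\<Sum>u\<in>UNIV. T \<delta> s u * Psi u) - (\<Sum>u\<in>UNIV. T 0 s u * Psi u)"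
    by (simp add: left_diff_distrib sum_subtractf)
  show ?thesis unfolding ee_def e1 e2 unfolding dd_def R_def[symmetric] using h p by (simp add: algebra_simps)
qed

lemma dd_full:
  assumes "0 \<le> \<delta>" "\<delta> < eps0" "s \<in> Full"
  shows "dd \<delta> s = 0"
  using rho_eq_X_full[OF assms(1,2)] Psi_full assms(3) unfolding dd_def Full_def by simp

lemma Lop_dd:
  assumes "0 \<le> \<delta>" "\<delta> < eps0"
  shows "Lop (dd \<delta>) s = (if s \<in> Full then 0 else (\<Sum>u\<in>UNIV. (T \<delta> s u - T 0 s u) * dd \<delta> u) + ee \<delta> s)"
proof (cases "s \<in> Full")
  case True then show ?thesis unfolding Lop_def using dd_full[OF assms] by simp
next
  case False
  have "(\<Sum>u\<in>UNIV. (T \<delta> s u - T 0 s u) * dd \<delta> u) = (\<Sum>u\<in>UNIV. T \<delta> s u * dd \<delta> u) - (\<Sum>u\<in>UNIV. T 0 s u * dd \<delta> u)"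
    by (simp add: left_diff_distrib sum_subtractf)
  then show ?thesis unfolding Lop_def using False dd_rec[OF assms, of s] by simp
qed

lemma main_bound:
  assumes "0 \<le> \<delta>" "\<delta> < eps0" and C: "C > 0" "\<And>v s. \<bar>v s\<bar> \<le> C * (\<Sum>s'\<in>UNIV. \<bar>Lop v s'\<bar>)"
    and K: "K \<ge> 0" "\<And>s u. \<bar>T \<delta> s u - T 0 s u\<bar> \<le> K * \<delta>"
    and small: "real CARD('n state) ^ 2 * C * K * \<delta> \<le> 1 / 2"
  shows "(\<Sum>s\<in>UNIV. \<bar>dd \<delta> s\<bar>) \<le> 2 * real CARD('n state) * C * (\<Sum>s\<in>UNIV. \<bar>ee \<delta> s\<bar>)"
proof -
  define NS where "NS = real CARD('n state)"
  define SD where "SD = (\<Sum>s\<in>UNIV. \<bar>dd \<delta> s\<bar>)"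
  define SE where "SE = (\<Sum>s\<in>UNIV. \<bar>ee \<delta> s\<bar>)"
  have SDnn: "SD \<ge> 0" unfolding SD_def by (simp add: sum_nonneg)
  have L: "\<bar>Lop (dd \<delta>) s\<bar> \<le> K * \<delta> * SD + \<bar>ee \<delta> s\<bar>" for s
  proof (cases "s \<in> Full")
    case True
    then show ?thesis using Lop_dd[OF assms(1,2), of s] K(1) assms(1) SDnn by simp
  next
    case False
    have "\<bar>\<Sum>u\<in>UNIV. (T \<delta> s u - T 0 s u) * dd \<delta> u\<bar> \<le> (\<Sum>u\<in>UNIV. K * \<delta> * \<bar>dd \<delta> u\<bar>)"
      by (rule order_trans[OF sum_abs], rule sum_mono) (simp add: abs_mult K(2) mult_right_mono)
    also have "\<dots> = K * \<delta> * SD" unfolding SD_def by (simp add: sum_distrib_left)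
    finally show ?thesis using Lop_dd[OF assms(1,2), of s] False by (simp add: abs_triangle_ineq order_trans)
  qed
  have "\<bar>dd \<delta> s\<bar> \<le> C * (NS * (K * \<delta> * SD) + SE)" for s
  proof -
    have "\<bar>dd \<delta> s\<bar> \<le> C * (\<Sum>s'\<in>UNIV. \<bar>Lop (dd \<delta>) s'\<bar>)" by (rule C(2))
    also have "(\<Sum>s'\<in>UNIV. \<bar>Lop (dd \<delta>) s'\<bar>) \<le> (\<Sum>s'\<in>UNIV. K * \<delta> * SD + \<bar>ee \<delta> s'\<bar>)"
      by (rule sum_mono) (rule L)
    also have "\<dots> = NS * (K * \<delta> * SD) + SE" unfolding NS_def SE_def by (simp add: sum.distrib)
    finally show ?thesis using C(1) by (simp add: mult_left_mono)
  qed
  then have "SD \<le> (\<Sum>s\<in>(UNIV::'n state set). C * (NS * (K * \<delta> * SD) + SE))"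
    unfolding SD_def by (rule sum_mono)
  also have "\<dots> = NS * C * (NS * (K * \<delta> * SD) + SE)" unfolding NS_def by simp
  finally have "SD \<le> NS ^ 2 * C * K * \<delta> * SD + NS * C * SE" by (simp add: algebra_simps power2_eq_square)
  moreover have "NS ^ 2 * C * K * \<delta> * SD \<le> 1/2 * SD"
    unfolding NS_def by (rule mult_right_mono[OF small SDnn])
  ultimately have "SD \<le> 2 * NS * C * SE" by linarith
  then show ?thesis unfolding SD_def SE_def NS_def .
qed

lemma rho0:
  "rho2 b c r w1 w2 0 s = Xf s"
proof -
  have ee0: "ee 0 s = 0" for s unfolding ee_def TX_form[OF order_refl eps0_pos] Gs0 by simp
  have "Lop (dd 0) = (\<lambda>_. 0)"
    by (rule ext) (simp add: Lop_dd[OF order_refl eps0_pos] ee0)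
  then have "dd 0 = (\<lambda>_. 0)" by (rule Lop_inj0)
  then show ?thesis unfolding dd_def by (metis diff_zero mult_zero_left eq_iff_diff_eq_0)
qed

end

context model begin

lemma deriv_right:
  assumes "(f has_real_derivative D) (at 0)"
  shows "((\<lambda>y. (f y - f 0) / y) \<longlongrightarrow> D) (at_right 0)"
proof -
  have "(f has_real_derivative D) (at 0 within {0<..})" using assms by (rule has_field_derivative_at_within)
  then show ?thesis unfolding has_field_derivative_iff by simp
qed

lemma cont_right:
  assumes "(f has_real_derivative D) (at 0)"
  shows "(f \<longlongrightarrow> f 0) (at_right 0)"
proof -
  have "(f has_real_derivative D) (at 0 within {0<..})" using assms by (rule has_field_derivative_at_within)
  then have "continuous (at_right 0) f" by (rule DERIV_continuous)
  then show ?thesis unfolding continuous_within .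
qed

lemma T_lip: "\<exists>K\<ge>0. eventually (\<lambda>\<delta>. \<forall>s u. \<bar>T \<delta> s u - T 0 s u\<bar> \<le> K * \<delta>) (at_right 0)"
proof -
  have "\<forall>p. \<exists>D. ((\<lambda>\<delta>. T \<delta> (fst p) (snd p)) has_real_derivative D) (at 0)" using T_deriv by blast
  then have "\<exists>DT. \<forall>p. ((\<lambda>\<delta>. T \<delta> (fst p) (snd p)) has_real_derivative DT p) (at 0)"
    by (rule choice)
  then obtain DT where DT: "\<forall>p. ((\<lambda>\<delta>. T \<delta> (fst p) (snd p)) has_real_derivative DT p) (at 0)"
    by blast
  define K where "K = (\<Sum>p\<in>UNIV. \<bar>DT p\<bar> + 1)"
  have Kge: "\<bar>DT p\<bar> + 1 \<le> K" for p unfolding K_def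
    by (rule member_le_sum[of p UNIV "\<lambda>p. \<bar>DT p\<bar> + 1"]) auto
  have K0: "K \<ge> 0" using Kge[of undefined] by simp
  have ev: "eventually (\<lambda>\<delta>. \<bar>T \<delta> (fst p) (snd p) - T 0 (fst p) (snd p)\<bar> \<le> K * \<delta>) (at_right 0)" for p
  proof -
    have lim: "((\<lambda>y. (T y (fst p) (snd p) - T 0 (fst p) (snd p)) / y) \<longlongrightarrow> DT p) (at_right 0)"
      by (rule deriv_right[OF DT[rule_format]])
    have "eventually (\<lambda>y. dist ((T y (fst p) (snd p) - T 0 (fst p) (snd p)) / y) (DT p) < 1) (at_right 0)"
      by (rule tendstoD[OF lim]) simp
    then show ?thesis using eventually_at_right_less[of "0::real"]
    proof eventually_elim
      case (elim y)
      define A where "A = T y (fst p) (snd p) - T 0 (fst p) (snd p)"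
      have le1: "\<bar>A / y\<bar> \<le> \<bar>DT p\<bar> + 1" using elim(1) unfolding A_def dist_real_def by linarith
      have "\<bar>A / y\<bar> * y \<le> (\<bar>DT p\<bar> + 1) * y" by (rule mult_right_mono[OF le1]) (use elim(2) in linarith)
      moreover have "\<bar>A / y\<bar> * y = \<bar>A\<bar>" using elim(2) by (simp add: abs_divide)
      moreover have "(\<bar>DT p\<bar> + 1) * y \<le> K * y" using Kge[of p] elim(2) by (simp add: mult_right_mono)
      ultimately show ?case unfolding A_def by linarith
    qed
  qed
  have "eventually (\<lambda>\<delta>. \<forall>p. \<bar>T \<delta> (fst p) (snd p) - T 0 (fst p) (snd p)\<bar> \<le> K * \<delta>) (at_right 0)"
    by (rule eventually_all_finite) (rule ev)
  then have "eventually (\<lambda>\<delta>. \<forall>s u. \<bar>T \<delta> s u - T 0 s u\<bar> \<le> K * \<delta>) (at_right 0)"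
    by eventually_elim (metis fst_conv snd_conv)
  then show ?thesis using K0 by blast
qed

lemma ee_lim: "((\<lambda>\<delta>. ee \<delta> s / \<delta>) \<longlongrightarrow> 0) (at_right 0)"
proof -
  have g: "((\<lambda>y. (Gs y s - Gs 0 s) / y) \<longlongrightarrow> Dp s) (at_right 0)"
    by (rule deriv_right[OF Gs_deriv])
  have t: "((\<lambda>y. T y s u) \<longlongrightarrow> T 0 s u) (at_right 0)" for u
    using T_deriv[of s u] cont_right by blast
  have lim: "((\<lambda>y. ((Gs y s - Gs 0 s) / y - Dp s) + (\<Sum>u\<in>UNIV. (T y s u - T 0 s u) * Psi u)) \<longlongrightarrow> (Dp s - Dp s) + (\<Sum>u\<in>UNIV. (T 0 s u - T 0 s u) * Psi u)) (at_right 0)"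
    by (intro tendsto_intros g t)
  have ev: "eventually (\<lambda>y. ((Gs y s - Gs 0 s) / y - Dp s) + (\<Sum>u\<in>UNIV. (T y s u - T 0 s u) * Psi u) = ee y s / y) (at_right 0)"
  proof -
    have "eventually (\<lambda>y. y < eps0) (at_right (0::real))"
      using eps0_pos by (simp add: eventually_at_right_field) (blast intro: exI[of _ eps0])
    then show ?thesis using eventually_at_right_less[of "0::real"]
    proof eventually_elim
      case (elim y)
      have "(\<Sum>u\<in>UNIV. T y s u * Xf u) = Xf s + Gs y s" using elim by (intro TX_form) auto
      then show ?case unfolding ee_def Gs0 using elim(2) by (simp add: field_simps)
    qed
  qed
  show ?thesis using tendsto_cong[OF ev] lim by simp
qed

lemma rho_deriv: "((\<lambda>\<delta>. rho2 b c r w1 w2 \<delta> \<xi>) has_real_derivative Psi \<xi>) (at 0 within {0..})"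
proof -
  obtain C where C: "C > 0" "\<And>v s. \<bar>v s\<bar> \<le> C * (\<Sum>s'\<in>UNIV. \<bar>Lop v s'\<bar>)" using Lop_bound by blast
  obtain K where K: "K \<ge> 0" "eventually (\<lambda>\<delta>. \<forall>s u. \<bar>T \<delta> s u - T 0 s u\<bar> \<le> K * \<delta>) (at_right 0)"
    using T_lip by blast
  define NS where "NS = real CARD('n state)"
  have small: "eventually (\<lambda>\<delta>. NS ^ 2 * C * K * \<delta> < 1/2) (at_right 0)"
  proof -
    have "((\<lambda>\<delta>. NS ^ 2 * C * K * \<delta>) \<longlongrightarrow> NS ^ 2 * C * K * 0) (at_right (0::real))"
      by (intro tendsto_intros)
    then show ?thesis by (rule order_tendstoD(2)) simp
  qed
  have eps: "eventually (\<lambda>y. y < eps0) (at_right (0::real))"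
    using eps0_pos by (simp add: eventually_at_right_field) (blast intro: exI[of _ eps0])
  have bound: "eventually (\<lambda>\<delta>. \<bar>dd \<delta> \<xi> / \<delta>\<bar> \<le> 2 * NS * C * (\<Sum>s\<in>UNIV. \<bar>ee \<delta> s / \<delta>\<bar>)) (at_right 0)"
    using K(2) small eps eventually_at_right_less[of "0::real"]
  proof eventually_elim
    case (elim \<delta>)
    have mb: "(\<Sum>s\<in>UNIV. \<bar>dd \<delta> s\<bar>) \<le> 2 * NS * C * (\<Sum>s\<in>UNIV. \<bar>ee \<delta> s\<bar>)"
      unfolding NS_def by (rule main_bound[OF _ _ C K(1)]) (use elim in \<open>auto simp: NS_def\<close>)
    have "\<bar>dd \<delta> \<xi>\<bar> \<le> (\<Sum>s\<in>UNIV. \<bar>dd \<delta> s\<bar>)" by (rule member_le_sum) auto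
    with mb have "\<bar>dd \<delta> \<xi>\<bar> \<le> 2 * NS * C * (\<Sum>s\<in>UNIV. \<bar>ee \<delta> s\<bar>)" by linarith
    then have "\<bar>dd \<delta> \<xi>\<bar> / \<delta> \<le> 2 * NS * C * (\<Sum>s\<in>UNIV. \<bar>ee \<delta> s\<bar>) / \<delta>"
      using elim(4) by (simp add: divide_right_mono)
    moreover have "\<bar>dd \<delta> \<xi> / \<delta>\<bar> = \<bar>dd \<delta> \<xi>\<bar> / \<delta>" using elim(4) by (simp add: abs_divide)
    moreover have "2 * NS * C * (\<Sum>s\<in>UNIV. \<bar>ee \<delta> s\<bar>) / \<delta> = 2 * NS * C * (\<Sum>s\<in>UNIV. \<bar>ee \<delta> s / \<delta>\<bar>)"
      using elim(4) by (simp add: abs_divide sum_divide_distrib[symmetric])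
    ultimately show ?case using elim(4) by simp
  qed
  have "((\<lambda>\<delta>. 2 * NS * C * (\<Sum>s\<in>UNIV. \<bar>ee \<delta> s / \<delta>\<bar>)) \<longlongrightarrow> 2 * NS * C * (\<Sum>s\<in>(UNIV::'n state set). 0)) (at_right 0)"
    by (intro tendsto_intros tendsto_rabs_zero ee_lim)
  then have z: "((\<lambda>\<delta>. 2 * NS * C * (\<Sum>s\<in>UNIV. \<bar>ee \<delta> s / \<delta>\<bar>)) \<longlongrightarrow> 0) (at_right 0)" by simp
  have dz: "((\<lambda>\<delta>. dd \<delta> \<xi> / \<delta>) \<longlongrightarrow> 0) (at_right 0)"
    by (rule Lim_null_comparison[OF _ z]) (use bound in simp)
  have "((\<lambda>\<delta>. Psi \<xi> + dd \<delta> \<xi> / \<delta>) \<longlongrightarrow> Psi \<xi> + 0) (at_right 0)"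
    by (intro tendsto_intros dz)
  moreover have "eventually (\<lambda>\<delta>. Psi \<xi> + dd \<delta> \<xi> / \<delta> = (rho2 b c r w1 w2 \<delta> \<xi> - rho2 b c r w1 w2 0 \<xi>) / (\<delta> - 0)) (at_right 0)"
    using eventually_at_right_less[of "0::real"]
  proof eventually_elim
    case (elim \<delta>)
    then show ?case unfolding dd_def rho0 by (simp add: field_simps)
  qed
  ultimately have "((\<lambda>\<delta>. (rho2 b c r w1 w2 \<delta> \<xi> - rho2 b c r w1 w2 0 \<xi>) / (\<delta> - 0)) \<longlongrightarrow> Psi \<xi>) (at_right 0)"
    using tendsto_cong by force
  then show ?thesis unfolding has_field_derivative_iff at_within_Ici_at_right .
qed

end

theorem mainTheorem2:
  fixes w1 w2 :: "'n::finite \<Rightarrow> 'n \<Rightarrow> real" and b c r :: real and \<xi> :: "'n state"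
  assumes "CARD('n) \<ge> 2"
    and "graph_ok w1" and "graph_ok w2"
    and "r \<ge> 0"
    and "\<not> (monomorphic (fst \<xi>) \<and> monomorphic (snd \<xi>))"
  shows "\<exists>D. ((\<lambda>\<delta>. rho2 b c r w1 w2 \<delta> \<xi>) has_real_derivative D) (at 0 within {0..})
           \<and> (D > 0 \<longleftrightarrow>
              - (r - 1) * thetaT w2 (snd \<xi>) 2 + c * phiT w1 w2 \<xi> 2 0
              + b * (phiT w1 w2 \<xi> 0 1 - phiT w1 w2 \<xi> 2 1) > 0)"
proof -
  interpret m: model w1 w2 b c r
    by unfold_locales (use assms in \<open>simp_all add: graph_ok_def\<close>)
  have "m.Psi \<xi> > 0 \<longleftrightarrow> - (r - 1) * thetaT w2 (snd \<xi>) 2 + c * phiT w1 w2 \<xi> 2 0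
              + b * (phiT w1 w2 \<xi> 0 1 - phiT w1 w2 \<xi> 2 1) > 0"
    unfolding m.Psi_def by (simp add: zero_less_divide_iff)
  then show ?thesis using m.rho_deriv[of \<xi>] by blast
qed

end
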